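(* Let $\Sigma_k^o:=\mathbb{E}\{\mathbf{x}^o_k(\mathbf{x}^o_k)'\}$. (i) For any signaling rule $\eta\in\Upsilon$, the matrices $H_k=\mathrm{cov}\{\mathbb{E}\{\mathbf{x}^o_k\mid\mathbf{s}^o_{1:k}\}\}$, $k=1,\ldots,\kappa$, satisfy $\Sigma_1^o\succeq H_1\succeq O$ and $\Sigma_k^o\succeq H_k\succeq AH_{k-1}A'$ for $k>1$. (ii) Conversely, for any positive semidefinite matrices $S_1,\ldots,S_\kappa\in\mathbb{S}^m_+$ satisfying $\Sigma_1^o\succeq S_1\succeq O$ and $\Sigma_k^o\succeq S_k\succeq AS_{k-1}A'$ for $k>1$, there exists a memoryless linear-plus-noise signaling rule $\eta\in\Upsilon$ (i.e., one with $\mathbf{s}_k=L_{k,k}'\mathbf{x}_k+\boldsymbol{\vartheta}_k$ for some $L_{k,k}\in\mathbb{R}^{m\times m}$) such that $H_k=S_k$ for all $k=1,\ldots,\kappa$.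
   Context: Fix $A\in\mathbb{R}^{m\times m}$, $\Sigma_1,\Sigma_w\in\mathbb{S}^m_+$ (positive semidefinite symmetric matrices). The control-free state is the Gauss–Markov process $\mathbf{x}^o_{k+1}=A\mathbf{x}^o_k+\mathbf{w}_k$, $k=1,\ldots,\kappa$, with $\mathbf{x}^o_1\sim\mathcal{N}(0,\Sigma_1)$ and $\mathbf{w}_k\sim\mathcal{N}(0,\Sigma_w)$ i.i.d., independent of $\mathbf{x}^o_1$. A signaling rule $\eta\in\Upsilon$ is specified by deterministic matrices $L_k\in\mathbb{R}^{mk\times m}$ and covariances $\Theta_k\in\mathbb{S}^m_+$; it produces signals $\mathbf{s}_k=L_k'\mathbf{x}_{1:k}+\boldsymbol{\vartheta}_k\in\mathbb{R}^m$ from the (possibly controlled) states $\mathbf{x}_{1:k}=[\mathbf{x}_k'\cdots\mathbf{x}_1']'$, with $\boldsymbol{\vartheta}_k\sim\mathcal{N}(0,\Theta_k)$ independent of all other random variables. The associated control-free signals are $\mathbf{s}^o_k:=L_k'\mathbf{x}^o_{1:k}+\boldsymbol{\vartheta}_k$. (In the controlled system $\mathbf{x}_{k+1}=A\mathbf{x}_k+B\mathbf{u}_k+\mathbf{w}_k$, $\mathbf{x}_1=\mathbf{x}^o_1$, with $\mathbf{u}_k$ a measurable function of $\mathbf{s}_{1:k}$, one has $\mathbb{E}\{\mathbf{x}^o_k\mid\mathbf{s}_{1:k}\}=\mathbb{E}\{\mathbf{x}^o_k\mid\mathbf{s}^o_{1:k}\}$, so $H_k$ is the covariance of the posterior estimate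 of the control-free state given the signals.) For symmetric matrices, $X\succeq Y$ means $X-Y$ is positive semidefinite. *)

theory Defs
  imports "Jordan_Normal_Form.Matrix"
begin

definition psd :: "nat \<Rightarrow> real mat \<Rightarrow> bool" where
  "psd m M \<longleftrightarrow> M \<in> carrier_mat m m \<and> transpose_mat M = M \<and>
     (\<forall>v \<in> carrier_vec m. 0 \<le> v \<bullet> (M *\<^sub>v v))"

definition loewner_ge :: "nat \<Rightarrow> real mat \<Rightarrow> real mat \<Rightarrow> bool" where
  "loewner_ge m X Y \<longleftrightarrow> X \<in> carrier_mat m m \<and> Y \<in> carrier_mat m m \<and> psd m (X - Y)"

(* scov A S1 Sw n = E{x^o_{n+1} (x^o_{n+1})'} *)
primrec scov :: "real mat \<Rightarrow> real mat \<Rightarrow> real mat \<Rightarrow> nat \<Rightarrow> real mat" where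
  "scov A S1 Sw 0 = S1"
| "scov A S1 Sw (Suc n) = A * scov A S1 Sw n * transpose_mat A + Sw"

definition Sigma_o :: "real mat \<Rightarrow> real mat \<Rightarrow> real mat \<Rightarrow> nat \<Rightarrow> real mat" where
  "Sigma_o A S1 Sw k = scov A S1 Sw (k - 1)"

(* E{x^o_a (x^o_b)'} for times a, b \<ge> 1 *)
definition xcov :: "real mat \<Rightarrow> real mat \<Rightarrow> real mat \<Rightarrow> nat \<Rightarrow> nat \<Rightarrow> real mat" where
  "xcov A S1 Sw a b =
     (if b \<le> a then (A ^\<^sub>m (a - b)) * Sigma_o A S1 Sw b
      else Sigma_o A S1 Sw a * (transpose_mat A ^\<^sub>m (b - a)))"

definition blockmat :: "nat \<Rightarrow> nat \<Rightarrow> nat \<Rightarrow> (nat \<Rightarrow> nat \<Rightarrow> real mat) \<Rightarrow> real mat" where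
  "blockmat m p q B = mat (m * p) (m * q) (\<lambda>(r, c). B (r div m) (c div m) $$ (r mod m, c mod m))"

(* E{x^o_{1:i} (x^o_{1:j})'}, with x_{1:i} = [x_i' ... x_1']' *)
definition stackcov :: "nat \<Rightarrow> real mat \<Rightarrow> real mat \<Rightarrow> real mat \<Rightarrow> nat \<Rightarrow> nat \<Rightarrow> real mat" where
  "stackcov m A S1 Sw i j = blockmat m i j (\<lambda>p q. xcov A S1 Sw (i - p) (j - q))"

(* E{x^o_a (x^o_{1:j})'} *)
definition rowcov :: "nat \<Rightarrow> real mat \<Rightarrow> real mat \<Rightarrow> real mat \<Rightarrow> nat \<Rightarrow> nat \<Rightarrow> real mat" where
  "rowcov m A S1 Sw a j = blockmat m 1 j (\<lambda>p q. xcov A S1 Sw a (j - q))"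

(* E{s^o_{1:k} (s^o_{1:k})'}, with s_{1:k} = [s_k' ... s_1']',
   s^o_j = L_j' x^o_{1:j} + theta_j *)
definition sig_cov :: "nat \<Rightarrow> real mat \<Rightarrow> real mat \<Rightarrow> real mat \<Rightarrow>
    (nat \<Rightarrow> real mat) \<Rightarrow> (nat \<Rightarrow> real mat) \<Rightarrow> nat \<Rightarrow> real mat" where
  "sig_cov m A S1 Sw L Th k = blockmat m k k (\<lambda>p q.
      let a = k - p; b = k - q in
      transpose_mat (L a) * stackcov m A S1 Sw a b * L b + (if a = b then Th a else 0\<^sub>m m m))"

(* E{x^o_k (s^o_{1:k})'} *)
definition cross_cov :: "nat \<Rightarrow> real mat \<Rightarrow> real mat \<Rightarrow> real mat \<Rightarrow>
    (nat \<Rightarrow> real mat) \<Rightarrow> nat \<Rightarrow> real mat" where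
  "cross_cov m A S1 Sw L k = blockmat m 1 k (\<lambda>p q.
      let b = k - q in rowcov m A S1 Sw k b * L b)"

(* Covariance of E{x | s} for zero-mean jointly Gaussian x (dim m), s (dim n):
   E{x|s} = K s where K solves the normal equations K Css = Cxs,
   so cov(E{x|s}) = K Css K'. *)
definition cond_mean_cov :: "nat \<Rightarrow> nat \<Rightarrow> real mat \<Rightarrow> real mat \<Rightarrow> real mat" where
  "cond_mean_cov m n Cxs Css =
     (let K = (SOME K. K \<in> carrier_mat m n \<and> K * Css = Cxs) in K * Css * transpose_mat K)"

(* H_k = cov{E{x^o_k | s^o_{1:k}}} for the signaling rule (L, Th) *)
definition Hcov :: "nat \<Rightarrow> real mat \<Rightarrow> real mat \<Rightarrow> real mat \<Rightarrow>
    (nat \<Rightarrow> real mat) \<Rightarrow> (nat \<Rightarrow> real mat) \<Rightarrow> nat \<Rightarrow> real mat" where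
  "Hcov m A S1 Sw L Th k =
     cond_mean_cov m (m * k) (cross_cov m A S1 Sw L k) (sig_cov m A S1 Sw L Th k)"

definition signaling_rule :: "nat \<Rightarrow> nat \<Rightarrow> (nat \<Rightarrow> real mat) \<Rightarrow> (nat \<Rightarrow> real mat) \<Rightarrow> bool" where
  "signaling_rule m \<kappa> L Th \<longleftrightarrow>
     (\<forall>k\<in>{1..\<kappa>}. L k \<in> carrier_mat (m * k) m \<and> psd m (Th k))"

(* memoryless rule: L_k = [L_{k,k}' 0 ... 0]', acting only on x_k *)
definition memoryless_L :: "nat \<Rightarrow> (nat \<Rightarrow> real mat) \<Rightarrow> nat \<Rightarrow> real mat" where
  "memoryless_L m Lkk k = mat (m * k) m (\<lambda>(r, c). if r < m then Lkk k $$ (r, c) else 0)"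

end

theory Submission
  imports Defs "HOL-Library.Function_Algebras"
begin


instantiation "fun" :: (type, real_vector) real_vector
begin
definition scaleR_fun :: "real \<Rightarrow> ('a \<Rightarrow> 'b) \<Rightarrow> 'a \<Rightarrow> 'b" where
  "scaleR_fun r f = (\<lambda>x. r *\<^sub>R f x)"
instance by standard (auto simp: scaleR_fun_def fun_eq_iff algebra_simps)
end

lemma scaleR_fun_apply[simp]: "(r *\<^sub>R f) x = r *\<^sub>R f x" by (simp add: scaleR_fun_def)

lemma sum_fun_apply[simp]: "(sum F S) x = (\<Sum>i\<in>S. F i x)"
  by (induction S rule: infinite_finite_induct) auto

definition gram :: "('v \<Rightarrow> 'v \<Rightarrow> real) \<Rightarrow> nat \<Rightarrow> nat \<Rightarrow> (nat \<Rightarrow> 'v) \<Rightarrow> (nat \<Rightarrow> 'v) \<Rightarrow> real mat" where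
  "gram B m n x y = mat m n (\<lambda>(i,j). B (x i) (y j))"

definition lin :: "real mat \<Rightarrow> (nat \<Rightarrow> 'v::real_vector) \<Rightarrow> nat \<Rightarrow> 'v" where
  "lin M x = (\<lambda>i. if i < dim_row M then (\<Sum>j<dim_col M. M $$ (i,j) *\<^sub>R x j) else 0)"

definition inspan :: "'v::real_vector \<Rightarrow> (nat \<Rightarrow> 'v) \<Rightarrow> nat \<Rightarrow> bool" where
  "inspan z y n \<longleftrightarrow> (\<exists>c. z = (\<Sum>l<n. c l *\<^sub>R y l))"

lemma gram_carrier[simp]: "gram B m n x y \<in> carrier_mat m n"
  by (simp add: gram_def)
lemma gram_dims[simp]: "dim_row (gram B m n x y) = m" "dim_col (gram B m n x y) = n"
  by (simp_all add: gram_def)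
lemma gram_index[simp]: "i < m \<Longrightarrow> j < n \<Longrightarrow> gram B m n x y $$ (i,j) = B (x i) (y j)"
  by (simp add: gram_def)

lemma gram_cong: "(\<And>i. i < m \<Longrightarrow> x i = x' i) \<Longrightarrow> (\<And>j. j < n \<Longrightarrow> y j = y' j) \<Longrightarrow>
   gram B m n x y = gram B m n x' y'"
  by (auto simp: gram_def intro!: cong_mat)

lemma lin_add: "lin M (x + y) = lin M x + lin M y"
  by (auto simp: lin_def fun_eq_iff scaleR_add_right sum.distrib)
lemma lin_diff: "lin M (x - y) = lin M x - lin M y"
  by (auto simp: lin_def fun_eq_iff scaleR_diff_right sum_subtractf)
lemma lin_zero[simp]: "lin M 0 = 0"
  by (auto simp: lin_def fun_eq_iff)
lemma lin_mult: assumes "dim_row N = dim_col M"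
  shows "lin M (lin N x) = lin (M * N) x"
proof -
  have "(\<Sum>j<dim_col M. M $$ (i, j) *\<^sub>R (\<Sum>l<dim_col N. N $$ (j, l) *\<^sub>R x l)) =
        (\<Sum>l<dim_col N. (M * N) $$ (i, l) *\<^sub>R x l)" if "i < dim_row M" for i
  proof -
    have "(\<Sum>j<dim_col M. M $$ (i, j) *\<^sub>R (\<Sum>l<dim_col N. N $$ (j, l) *\<^sub>R x l))
      = (\<Sum>j<dim_col M. \<Sum>l<dim_col N. (M $$ (i, j) * N $$ (j, l)) *\<^sub>R x l)"
      by (simp add: scaleR_sum_right)
    also have "\<dots> = (\<Sum>l<dim_col N. \<Sum>j<dim_col M. (M $$ (i, j) * N $$ (j, l)) *\<^sub>R x l)"
      by (rule sum.swap)
    also have "\<dots> = (\<Sum>l<dim_col N. (M * N) $$ (i, l) *\<^sub>R x l)"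
      using that assms
      by (auto intro!: sum.cong simp: scaleR_sum_left[symmetric] scalar_prod_def lessThan_atLeast0)
    finally show ?thesis .
  qed
  then show ?thesis using assms
    by (auto simp: lin_def fun_eq_iff intro!: sum.cong)
qed

locale sip =
  fixes B :: "'v::real_vector \<Rightarrow> 'v \<Rightarrow> real"
  assumes add_left: "B (x + y) z = B x z + B y z"
    and scale_left: "B (r *\<^sub>R x) z = r * B x z"
    and symB: "B x y = B y x"
    and pos: "0 \<le> B x x"
begin

lemma add_right: "B z (x + y) = B z x + B z y"
  using add_left symB by metis
lemma scale_right: "B z (r *\<^sub>R x) = r * B z x"
  using scale_left symB by metis
lemma zero_left[simp]: "B 0 z = 0"
  using scale_left[of 0] by simp
lemma zero_right[simp]: "B z 0 = 0"
  using scale_right[of _ 0] by simp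
lemma minus_left: "B (- x) z = - B x z"
  using scale_left[of "-1"] by simp
lemma minus_right: "B z (- x) = - B z x"
  using scale_right[of _ "-1"] by simp
lemma diff_left: "B (x - y) z = B x z - B y z"
  using add_left[of x "-y"] minus_left by simp
lemma diff_right: "B z (x - y) = B z x - B z y"
  using add_right[of z x "-y"] minus_right by simp
lemma sum_left: "B (\<Sum>i\<in>S. f i) z = (\<Sum>i\<in>S. B (f i) z)"
  by (induction S rule: infinite_finite_induct) (auto simp: add_left)
lemma sum_right: "B z (\<Sum>i\<in>S. f i) = (\<Sum>i\<in>S. B z (f i))"
  by (induction S rule: infinite_finite_induct) (auto simp: add_right)

lemmas bil = add_left add_right scale_left scale_right diff_left diff_right sum_left sum_right
  minus_left minus_right

lemma cs0: assumes "B x x = 0" shows "B x y = 0"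
proof (rule ccontr)
  assume ne: "B x y \<noteq> 0"
  define b where "b = B x y"
  define c where "c = B y y"
  have c: "c \<ge> 0" using pos c_def by simp
  define t where "t = - b / (c + 1)"
  have "0 \<le> B (x + t *\<^sub>R y) (x + t *\<^sub>R y)" by (rule pos)
  also have "\<dots> = 2 * t * b + t * t * c"
    using assms by (simp add: bil b_def c_def symB[of y x] algebra_simps)
  also have "\<dots> = b * b * (- c - 2) / ((c + 1) * (c + 1))"
    using c unfolding t_def by (simp add: divide_simps) (simp add: algebra_simps)
  also have "\<dots> < 0"
  proof -
    have "b * b > 0" using ne b_def by (metis not_real_square_gt_zero)
    moreover have "- c - 2 < 0" using c by simp
    ultimately have "b * b * (- c - 2) < 0" by (simp add: mult_pos_neg)
    moreover have "(c + 1) * (c + 1) > 0" using c by simp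
    ultimately show ?thesis by (simp add: divide_neg_pos)
  qed
  finally show False by simp
qed


lemma gram_lin_left: assumes M: "M \<in> carrier_mat p k"
  shows "gram B p n (lin M x) y = M * gram B k n x y"
proof (rule eq_matI)
  fix i j assume ij: "i < dim_row (M * gram B k n x y)" "j < dim_col (M * gram B k n x y)"
  then have i: "i < p" and j: "j < n" using M by auto
  have "gram B p n (lin M x) y $$ (i, j) = (\<Sum>l<k. M $$ (i,l) * B (x l) (y j))"
    using i j M by (simp add: lin_def bil)
  also have "\<dots> = (M * gram B k n x y) $$ (i, j)"
    using i j M by (simp add: scalar_prod_def lessThan_atLeast0)
  finally show "gram B p n (lin M x) y $$ (i, j) = (M * gram B k n x y) $$ (i, j)" .
qed (use M in auto)

lemma gram_transpose: "gram B n m y x = transpose_mat (gram B m n x y)"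
  by (rule eq_matI) (auto simp: symB)

lemma gram_lin_right: assumes N: "N \<in> carrier_mat q k"
  shows "gram B m q x (lin N y) = gram B m k x y * transpose_mat N"
proof -
  have "gram B m q x (lin N y) = transpose_mat (gram B q m (lin N y) x)"
    by (rule gram_transpose)
  also have "\<dots> = transpose_mat (N * gram B k m y x)" using gram_lin_left[OF N] by simp
  also have "\<dots> = transpose_mat (gram B k m y x) * transpose_mat N"
    using N by (simp add: transpose_mult[of N q k _ m])
  also have "transpose_mat (gram B k m y x) = gram B m k x y"
    using gram_transpose[of m k x y] by simp
  finally show ?thesis .
qed

lemma gram_add_left: "gram B m n (x + x') y = gram B m n x y + gram B m n x' y"
  by (rule eq_matI) (auto simp: bil)
lemma gram_add_right: "gram B m n x (y + y') = gram B m n x y + gram B m n x y'"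
  by (rule eq_matI) (auto simp: bil)
lemma gram_diff_left: "gram B m n (x - x') y = gram B m n x y - gram B m n x' y"
  by (rule eq_matI) (auto simp: bil)
lemma gram_diff_right: "gram B m n x (y - y') = gram B m n x y - gram B m n x y'"
  by (rule eq_matI) (auto simp: bil)
lemma gram_zero_left[simp]: "gram B m n 0 y = 0\<^sub>m m n"
  by (rule eq_matI) auto
lemma gram_zero_right[simp]: "gram B m n x 0 = 0\<^sub>m m n"
  by (rule eq_matI) auto
lemma gram_orth: "(\<And>i j. i < m \<Longrightarrow> j < n \<Longrightarrow> B (x i) (y j) = 0) \<Longrightarrow> gram B m n x y = 0\<^sub>m m n"
  by (rule eq_matI) auto

lemma psd_gram: "psd m (gram B m m x x)"
  unfolding psd_def
proof (intro conjI ballI)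
  show "transpose_mat (gram B m m x x) = gram B m m x x"
    using gram_transpose[of m m x x] by simp
next
  fix v :: "real vec" assume v: "v \<in> carrier_vec m"
  define z where "z = (\<Sum>i<m. (v $ i) *\<^sub>R x i)"
  have "v \<bullet> (gram B m m x x *\<^sub>v v) = (\<Sum>i<m. v $ i * (\<Sum>j<m. B (x i) (x j) * v $ j))"
    using v by (simp add: scalar_prod_def lessThan_atLeast0)
  also have "\<dots> = B z z"
    unfolding z_def sum_left scale_left sum_right scale_right
    by (simp add: sum_distrib_left algebra_simps) (subst sum.swap, simp add: algebra_simps)
  finally show "0 \<le> v \<bullet> (gram B m m x x *\<^sub>v v)" using pos by simp
qed simp

lemma ortho_lin: "(\<And>l. l < dim_col K \<Longrightarrow> B z (y l) = 0) \<Longrightarrow> B z (lin K y i) = 0"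
  by (simp add: lin_def bil)

lemma ortho_inspan: "(\<And>l. l < n \<Longrightarrow> B z (y l) = 0) \<Longrightarrow> inspan w y n \<Longrightarrow> B z w = 0"
  by (auto simp: inspan_def bil)

end

lemma inspan_base: assumes "l < n" shows "inspan (y l) y n"
  unfolding inspan_def
proof (rule exI[of _ "\<lambda>j. if j = l then 1 else 0"])
  have "(\<Sum>j<n. (if j = l then 1 else 0) *\<^sub>R y j) = (\<Sum>j<n. if j = l then y j else 0)"
    by (rule sum.cong) auto
  then show "y l = (\<Sum>j<n. (if j = l then 1 else 0) *\<^sub>R y j)" using assms by simp
qed

lemma inspan_zero[simp]: "inspan 0 y n"
  unfolding inspan_def by (rule exI[of _ "\<lambda>j. 0"]) simp

lemma inspan_add: "inspan a y n \<Longrightarrow> inspan b y n \<Longrightarrow> inspan (a + b) y n"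
  unfolding inspan_def
proof (elim exE)
  fix c d assume "a = (\<Sum>l<n. c l *\<^sub>R y l)" "b = (\<Sum>l<n. d l *\<^sub>R y l)"
  then show "\<exists>e. a + b = (\<Sum>l<n. e l *\<^sub>R y l)"
    by (intro exI[of _ "\<lambda>l. c l + d l"]) (simp add: scaleR_add_left sum.distrib)
qed

lemma inspan_scale: "inspan a y n \<Longrightarrow> inspan (r *\<^sub>R a) y n"
  unfolding inspan_def
proof (elim exE)
  fix c assume "a = (\<Sum>l<n. c l *\<^sub>R y l)"
  then show "\<exists>e. r *\<^sub>R a = (\<Sum>l<n. e l *\<^sub>R y l)"
    by (intro exI[of _ "\<lambda>l. r * c l"]) (simp add: scaleR_sum_right)
qed

lemma inspan_diff: "inspan a y n \<Longrightarrow> inspan b y n \<Longrightarrow> inspan (a - b) y n"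
  using inspan_add[of a y n "(-1) *\<^sub>R b"] inspan_scale[of b y n "-1"] by simp

lemma inspan_sum: "(\<And>l. l \<in> S \<Longrightarrow> inspan (f l) y n) \<Longrightarrow> inspan (\<Sum>l\<in>S. f l) y n"
  by (induction S rule: infinite_finite_induct) (auto intro: inspan_add)

lemma inspan_lin: "(\<And>j. j < dim_col M \<Longrightarrow> inspan (z j) y n) \<Longrightarrow> inspan (lin M z i) y n"
  unfolding lin_def by (auto intro!: inspan_sum inspan_scale)

lemma inspan_trans: "inspan z y n \<Longrightarrow> (\<And>l. l < n \<Longrightarrow> inspan (y l) y' n') \<Longrightarrow> inspan z y' n'"
  unfolding inspan_def[of z y n] by (auto intro!: inspan_sum inspan_scale)

lemma inspan_mat: assumes "\<And>i. i < m \<Longrightarrow> inspan (z i) y n"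
  shows "\<exists>K \<in> carrier_mat m n. \<forall>i<m. z i = lin K y i"
proof -
  from assms have "\<forall>i. \<exists>c. i < m \<longrightarrow> z i = (\<Sum>l<n. c l *\<^sub>R y l)"
    unfolding inspan_def by blast
  then obtain c where c: "\<And>i. i < m \<Longrightarrow> z i = (\<Sum>l<n. c i l *\<^sub>R y l)" by metis
  show ?thesis
    by (rule bexI[of _ "mat m n (\<lambda>(i,l). c i l)"]) (auto simp: lin_def c)
qed

context sip begin

lemma proj_scalar: "\<exists>c. \<forall>l<(n::nat). B (x - (\<Sum>j<n. c j *\<^sub>R y j)) (y l) = 0"
proof (induction n arbitrary: x)
  case 0
  then show ?case by simp
next
  case (Suc n)
  obtain c where hc: "\<And>l. l < n \<Longrightarrow> B (x - (\<Sum>j<n. c j *\<^sub>R y j)) (y l) = 0"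
    using Suc.IH[of x] by blast
  obtain d where hd: "\<And>l. l < n \<Longrightarrow> B (y n - (\<Sum>j<n. d j *\<^sub>R y j)) (y l) = 0"
    using Suc.IH[of "y n"] by blast
  define r where "r = y n - (\<Sum>j<n. d j *\<^sub>R y j)"
  define x' where "x' = x - (\<Sum>j<n. c j *\<^sub>R y j)"
  have yn: "y n = r + (\<Sum>j<n. d j *\<^sub>R y j)" by (simp add: r_def)
  have x'r_orth: "B x' (y l) = 0" "B r (y l) = 0" if "l < n" for l
    using hc hd that by (auto simp: x'_def r_def)
  show ?case
  proof (cases "B r r = 0")
    case True
    define c' where "c' = c(n := 0)"
    have s: "(\<Sum>j<Suc n. c' j *\<^sub>R y j) = (\<Sum>j<n. c j *\<^sub>R y j)"
      by (simp add: c'_def)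
    have "B x' (y l) = 0" if "l < Suc n" for l
    proof (cases "l < n")
      case True then show ?thesis using x'r_orth by simp
    next
      case False
      then have l: "l = n" using that by simp
      have "B x' r = 0" using cs0[OF True] symB by metis
      then show ?thesis unfolding l yn by (simp add: bil x'r_orth)
    qed
    then show ?thesis using s x'_def by (intro exI[of _ c']) auto
  next
    case False
    define t where "t = B x' r / B r r"
    define c' where "c' = (\<lambda>j. if j < n then c j - t * d j else t)"
    have s: "x - (\<Sum>j<Suc n. c' j *\<^sub>R y j) = x' - t *\<^sub>R r"
      by (simp add: c'_def x'_def r_def scaleR_diff_left sum_subtractf scaleR_sum_right
          scaleR_diff_right algebra_simps)
    have "B (x' - t *\<^sub>R r) (y l) = 0" if "l < Suc n" for l
    proof (cases "l < n")
      case True then show ?thesis using x'r_orth by (simp add: bil)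
    next
      case False
      then have l: "l = n" using that by simp
      have "B x' r - t * B r r = 0" using False by (simp add: t_def \<open>B r r \<noteq> 0\<close>)
      then show ?thesis unfolding l yn by (simp add: bil x'r_orth)
    qed
    then show ?thesis using s by (intro exI[of _ c']) auto
  qed
qed

lemma proj: "\<exists>K \<in> carrier_mat m n. \<forall>i<m. \<forall>l<(n::nat). B (x i - lin K y i) (y l) = 0"
proof -
  have "\<forall>i. \<exists>c. \<forall>l<n. B (x i - (\<Sum>j<n. c j *\<^sub>R y j)) (y l) = 0"
    using proj_scalar by blast
  then obtain c where c: "\<And>i l. l < n \<Longrightarrow> B (x i - (\<Sum>j<n. c i j *\<^sub>R y j)) (y l) = 0" by metis
  show ?thesis
    by (rule bexI[of _ "mat m n (\<lambda>(i,l). c i l)"]) (auto simp: lin_def c)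
qed

lemma cond_cov: assumes K: "K \<in> carrier_mat m n"
  and orth: "\<And>i l. i < m \<Longrightarrow> l < n \<Longrightarrow> B (x i - lin K y i) (y l) = 0"
  shows "cond_mean_cov m n (gram B m n x y) (gram B n n y y) = gram B m m (lin K y) (lin K y)"
proof -
  define G where "G = gram B n n y y"
  have G: "G \<in> carrier_mat n n" by (simp add: G_def)
  have Gt: "transpose_mat G = G" using gram_transpose[of n n y y] by (simp add: G_def)
  have "gram B m n x y = gram B m n (lin K y) y"
    by (rule eq_matI) (use orth in \<open>auto simp: bil\<close>)
  also have "\<dots> = K * G" using gram_lin_left[OF K] by (simp add: G_def)
  finally have C: "gram B m n x y = K * G" .
  define K0 where "K0 = (SOME K0. K0 \<in> carrier_mat m n \<and> K0 * G = K * G)"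
  have "K0 \<in> carrier_mat m n \<and> K0 * G = K * G"
    unfolding K0_def by (rule someI[of _ K]) (use K in simp)
  then have K0: "K0 \<in> carrier_mat m n" and K0G: "K0 * G = K * G" by auto
  have "cond_mean_cov m n (gram B m n x y) G = K0 * G * transpose_mat K0"
    by (simp add: cond_mean_cov_def C K0_def Let_def)
  also have "\<dots> = K * (G * transpose_mat K0)"
    using K K0 G by (simp add: K0G assoc_mult_mat[of K m n G n])
  also have "G * transpose_mat K0 = transpose_mat (K0 * G)"
    using K0 G Gt by (simp add: transpose_mult[of K0 m n G n])
  also have "\<dots> = G * transpose_mat K"
    using K G Gt by (simp add: K0G transpose_mult[of K m n G n])
  also have "K * (G * transpose_mat K) = gram B m m (lin K y) (lin K y)"
    using K G by (simp add: gram_lin_left[OF K] gram_lin_right[OF K] G_def assoc_mult_mat[of K m n _ n])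
  finally show ?thesis by (simp add: G_def)
qed

end


lemma psd_sym: "psd m M \<Longrightarrow> i < m \<Longrightarrow> j < m \<Longrightarrow> M $$ (j,i) = M $$ (i,j)"
  unfolding psd_def by (metis carrier_matD index_transpose_mat(1))

lemma psd_qf: assumes "psd m M" shows "0 \<le> (\<Sum>i<m. \<Sum>j<m. a i * M $$ (i,j) * a j)"
proof -
  define v where "v = vec m a"
  have M: "M \<in> carrier_mat m m" using assms by (simp add: psd_def)
  have "v \<bullet> (M *\<^sub>v v) = (\<Sum>i<m. \<Sum>j<m. a i * M $$ (i,j) * a j)"
    using M by (auto simp: v_def scalar_prod_def lessThan_atLeast0 sum_distrib_left algebra_simps
        intro!: sum.cong)
  moreover have "0 \<le> v \<bullet> (M *\<^sub>v v)" using assms unfolding psd_def v_def by auto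
  ultimately show ?thesis by simp
qed

lemma qf_sym: assumes "psd m M"
  shows "(\<Sum>i<m. \<Sum>j<m. a i * M $$ (i,j) * b j) = (\<Sum>i<m. \<Sum>j<m. b i * M $$ (i,j) * a j)"
  by (subst sum.swap) (auto intro!: sum.cong simp: psd_sym[OF assms])

type_synonym pv = "nat \<times> nat \<times> nat \<Rightarrow> real"

definition ev :: "nat \<times> nat \<times> nat \<Rightarrow> pv" where "ev p = (\<lambda>q. if q = p then 1 else 0)"
definition wv :: "nat \<Rightarrow> nat \<Rightarrow> pv" where "wv n = (\<lambda>i. ev (0,n,i))"
definition tv :: "nat \<Rightarrow> nat \<Rightarrow> pv" where "tv n = (\<lambda>i. ev (2,n,i))"
definition Cw :: "real mat \<Rightarrow> real mat \<Rightarrow> nat \<Rightarrow> real mat" where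
  "Cw S1 Sw t = (if t = 0 then S1 else Sw)"

definition Bp :: "nat \<Rightarrow> nat \<Rightarrow> real mat \<Rightarrow> real mat \<Rightarrow> (nat \<Rightarrow> real mat) \<Rightarrow> pv \<Rightarrow> pv \<Rightarrow> real" where
  "Bp m \<kappa> S1 Sw Th f g =
    (\<Sum>t<\<kappa>. \<Sum>i<m. \<Sum>j<m. f (0,t,i) * Cw S1 Sw t $$ (i,j) * g (0,t,j)) +
    (\<Sum>t\<in>{1..\<kappa>}. \<Sum>i<m. \<Sum>j<m. f (2,t,i) * Th t $$ (i,j) * g (2,t,j))"

lemma Bp_sip: assumes S1: "psd m S1" and Sw: "psd m Sw" and Th: "\<And>t. t\<in>{1..\<kappa>} \<Longrightarrow> psd m (Th t)"
  shows "sip (Bp m \<kappa> S1 Sw Th)"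
proof
  have Cw: "psd m (Cw S1 Sw t)" for t using S1 Sw by (simp add: Cw_def)
  fix x y z :: pv and r :: real
  show "Bp m \<kappa> S1 Sw Th (x + y) z = Bp m \<kappa> S1 Sw Th x z + Bp m \<kappa> S1 Sw Th y z"
    by (simp add: Bp_def algebra_simps sum.distrib)
  show "Bp m \<kappa> S1 Sw Th (r *\<^sub>R x) z = r * Bp m \<kappa> S1 Sw Th x z"
    by (simp add: Bp_def sum_distrib_left algebra_simps)
  have 1: "(\<Sum>i<m. \<Sum>j<m. x (0,t,i) * Cw S1 Sw t $$ (i,j) * y (0,t,j)) =
        (\<Sum>i<m. \<Sum>j<m. y (0,t,i) * Cw S1 Sw t $$ (i,j) * x (0,t,j))" for t
    using qf_sym[OF Cw, where a="\<lambda>i. x (0,t,i)" and b="\<lambda>j. y (0,t,j)"] by simp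
  have 2: "(\<Sum>i<m. \<Sum>j<m. x (2,t,i) * Th t $$ (i,j) * y (2,t,j)) =
        (\<Sum>i<m. \<Sum>j<m. y (2,t,i) * Th t $$ (i,j) * x (2,t,j))" if "t \<in> {1..\<kappa>}" for t
    using qf_sym[OF Th[OF that], where a="\<lambda>i. x (2,t,i)" and b="\<lambda>j. y (2,t,j)"] by simp
  have 5: "(\<Sum>t\<in>{1..\<kappa>}. \<Sum>i<m. \<Sum>j<m. x (2,t,i) * Th t $$ (i,j) * y (2,t,j)) =
     (\<Sum>t\<in>{1..\<kappa>}. \<Sum>i<m. \<Sum>j<m. y (2,t,i) * Th t $$ (i,j) * x (2,t,j))"
    by (rule sum.cong[OF refl], rule 2, assumption)
  show "Bp m \<kappa> S1 Sw Th x y = Bp m \<kappa> S1 Sw Th y x"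
    unfolding Bp_def 5 using 1 by simp
  have 3: "0 \<le> (\<Sum>i<m. \<Sum>j<m. x (0,t,i) * Cw S1 Sw t $$ (i,j) * x (0,t,j))" for t
    using psd_qf[OF Cw, of "\<lambda>i. x (0,t,i)"] by simp
  have 4: "0 \<le> (\<Sum>i<m. \<Sum>j<m. x (2,t,i) * Th t $$ (i,j) * x (2,t,j))" if "t \<in> {1..\<kappa>}" for t
    using psd_qf[OF Th[OF that], of "\<lambda>i. x (2,t,i)"] by simp
  show "0 \<le> Bp m \<kappa> S1 Sw Th x x"
    unfolding Bp_def
  proof (rule add_nonneg_nonneg)
    show "0 \<le> (\<Sum>t<\<kappa>. \<Sum>i<m. \<Sum>j<m. x (0,t,i) * Cw S1 Sw t $$ (i,j) * x (0,t,j))"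
      by (rule sum_nonneg) (rule 3)
    show "0 \<le> (\<Sum>t\<in>{1..\<kappa>}. \<Sum>i<m. \<Sum>j<m. x (2,t,i) * Th t $$ (i,j) * x (2,t,j))"
      by (rule sum_nonneg) (rule 4, assumption)
  qed
qed

lemma Bp_disj:
  assumes "\<And>t i j. f (0,t,i) = 0 \<or> g (0,t,j) = 0" "\<And>t i j. f (2,t,i) = 0 \<or> g (2,t,j) = 0"
  shows "Bp m \<kappa> S1 Sw Th f g = 0"
proof -
  have 1: "f (0,t,i) * Cw S1 Sw t $$ (i,j) * g (0,t,j) = 0" for t i j
    using assms(1)[of t i j] by auto
  have 2: "f (2,t,i) * Th t $$ (i,j) * g (2,t,j) = 0" for t i j
    using assms(2)[of t i j] by auto
  show ?thesis unfolding Bp_def 1 2 by simp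
qed

lemma Bp_ev0: assumes "n < \<kappa>" "i < m"
  shows "Bp m \<kappa> S1 Sw Th (ev (0,n,i)) g = (\<Sum>j<m. Cw S1 Sw n $$ (i,j) * g (0,n,j))"
proof -
  have "(\<Sum>t<\<kappa>. \<Sum>i'<m. \<Sum>j<m. ev (0,n,i) (0,t,i') * Cw S1 Sw t $$ (i',j) * g (0,t,j)) =
        (\<Sum>t<\<kappa>. if t = n then (\<Sum>j<m. Cw S1 Sw t $$ (i,j) * g (0,t,j)) else 0)"
  proof (rule sum.cong[OF refl])
    fix t
    show "(\<Sum>i'<m. \<Sum>j<m. ev (0,n,i) (0,t,i') * Cw S1 Sw t $$ (i',j) * g (0,t,j)) =
        (if t = n then (\<Sum>j<m. Cw S1 Sw t $$ (i,j) * g (0,t,j)) else 0)"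
    proof (cases "t = n")
      case True
      have "(\<Sum>i'<m. \<Sum>j<m. ev (0,n,i) (0,t,i') * Cw S1 Sw t $$ (i',j) * g (0,t,j)) =
            (\<Sum>i'<m. if i' = i then (\<Sum>j<m. Cw S1 Sw t $$ (i,j) * g (0,t,j)) else 0)"
        by (rule sum.cong) (auto simp: ev_def True)
      then show ?thesis using assms True by simp
    next
      case False then show ?thesis by (simp add: ev_def)
    qed
  qed
  also have "\<dots> = (\<Sum>j<m. Cw S1 Sw n $$ (i,j) * g (0,n,j))" using assms by simp
  finally show ?thesis by (simp add: Bp_def ev_def)
qed

lemma Bp_ev1: assumes "n \<in> {1..\<kappa>}" "i < m"
  shows "Bp m \<kappa> S1 Sw Th (ev (2,n,i)) g = (\<Sum>j<m. Th n $$ (i,j) * g (2,n,j))"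
proof -
  have "(\<Sum>t\<in>{1..\<kappa>}. \<Sum>i'<m. \<Sum>j<m. ev (2,n,i) (2,t,i') * Th t $$ (i',j) * g (2,t,j)) =
        (\<Sum>t\<in>{1..\<kappa>}. if t = n then (\<Sum>j<m. Th t $$ (i,j) * g (2,t,j)) else 0)"
  proof (rule sum.cong[OF refl])
    fix t
    show "(\<Sum>i'<m. \<Sum>j<m. ev (2,n,i) (2,t,i') * Th t $$ (i',j) * g (2,t,j)) =
        (if t = n then (\<Sum>j<m. Th t $$ (i,j) * g (2,t,j)) else 0)"
    proof (cases "t = n")
      case True
      have "(\<Sum>i'<m. \<Sum>j<m. ev (2,n,i) (2,t,i') * Th t $$ (i',j) * g (2,t,j)) =
            (\<Sum>i'<m. if i' = i then (\<Sum>j<m. Th t $$ (i,j) * g (2,t,j)) else 0)"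
        by (rule sum.cong) (auto simp: ev_def True)
      then show ?thesis using assms True by simp
    next
      case False then show ?thesis by (simp add: ev_def)
    qed
  qed
  also have "\<dots> = (\<Sum>j<m. Th n $$ (i,j) * g (2,n,j))" using assms by simp
  finally show ?thesis by (simp add: Bp_def ev_def)
qed

lemma sum_delta_mult: "j' < m \<Longrightarrow> (\<Sum>j<m. c j * ev p (a j) ) = (\<Sum>j<m. if a j = p then c j else 0)"
  by (rule sum.cong) (auto simp: ev_def)

definition zc :: "nat \<Rightarrow> pv \<Rightarrow> bool" where
  "zc n f \<longleftrightarrow> (\<forall>t i. (n \<le> t \<longrightarrow> f (0,t,i) = 0) \<and> (n < t \<longrightarrow> f (2,t,i) = 0))"
definition noth :: "pv \<Rightarrow> bool" where
  "noth f \<longleftrightarrow> (\<forall>t i. f (2,t,i) = 0)"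

lemma zc_add: "zc n f \<Longrightarrow> zc n g \<Longrightarrow> zc n (f + g)" by (simp add: zc_def)
lemma zc_diff: "zc n f \<Longrightarrow> zc n g \<Longrightarrow> zc n (f - g)" by (simp add: zc_def)
lemma zc_zero[simp]: "zc n 0" by (simp add: zc_def)
lemma zc_zero'[simp]: "zc n (\<lambda>a. 0)" by (simp add: zc_def)
lemma noth_zero'[simp]: "noth (\<lambda>a. 0)" by (simp add: noth_def)
lemma zc_lin: "(\<And>j. zc n (x j)) \<Longrightarrow> zc n (lin M x i)"
  by (auto simp: zc_def lin_def)
lemma zc_mono: "zc n f \<Longrightarrow> n \<le> n' \<Longrightarrow> zc n' f" by (auto simp: zc_def)
lemma zc_wv: "zc (Suc n) (wv n i)" by (simp add: zc_def wv_def ev_def)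
lemma zc_tv: "zc n (tv n i)" by (simp add: zc_def tv_def ev_def)
lemma zc_inspan: "inspan z y n \<Longrightarrow> (\<And>l. l < n \<Longrightarrow> zc k (y l)) \<Longrightarrow> zc k z"
  by (auto simp: inspan_def zc_def)
lemma noth_add: "noth f \<Longrightarrow> noth g \<Longrightarrow> noth (f + g)" by (simp add: noth_def)
lemma zc_add_lam: "zc n f \<Longrightarrow> zc n g \<Longrightarrow> zc n (\<lambda>a. f a + g a)" by (simp add: zc_def)
lemma zc_diff_lam: "zc n f \<Longrightarrow> zc n g \<Longrightarrow> zc n (\<lambda>a. f a - g a)" by (simp add: zc_def)
lemma noth_add_lam: "noth f \<Longrightarrow> noth g \<Longrightarrow> noth (\<lambda>a. f a + g a)" by (simp add: noth_def)
lemma noth_zero[simp]: "noth 0" by (simp add: noth_def)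
lemma noth_lin: "(\<And>j. noth (x j)) \<Longrightarrow> noth (lin M x i)"
  by (auto simp: noth_def lin_def)
lemma noth_wv: "noth (wv n i)" by (simp add: noth_def wv_def ev_def)

primrec Xs :: "real mat \<Rightarrow> nat \<Rightarrow> nat \<Rightarrow> pv" where
  "Xs A 0 = 0"
| "Xs A (Suc n) = lin A (Xs A n) + wv n"

lemma X_zc: "zc n (Xs A n i) \<and> noth (Xs A n i)"
proof (induction n arbitrary: i)
  case 0 then show ?case by simp
next
  case (Suc n)
  have "zc (Suc n) (lin A (Xs A n) i)"
    by (intro zc_lin) (use Suc.IH zc_mono[of n _ "Suc n"] in auto)
  moreover have "noth (lin A (Xs A n) i)" using Suc by (intro noth_lin) auto
  ultimately show ?case by (simp add: zc_add zc_wv noth_add noth_wv zc_add_lam noth_add_lam)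
qed

lemma pow_mat_Suc_left: "A \<in> carrier_mat n n \<Longrightarrow> A ^\<^sub>m Suc k = A * A ^\<^sub>m k"
proof (induction k)
  case 0 then show ?case by simp
next
  case (Suc k)
  have "A ^\<^sub>m Suc (Suc k) = (A * A ^\<^sub>m k) * A" using Suc by simp
  also have "\<dots> = A * (A ^\<^sub>m k * A)" using Suc.prems by (simp add: assoc_mult_mat[of A n n _ n])
  finally show ?case by simp
qed

lemma transpose_pow: "(A::real mat) \<in> carrier_mat n n \<Longrightarrow> transpose_mat (A ^\<^sub>m k) = (transpose_mat A) ^\<^sub>m k"
proof (induction k)
  case 0 then show ?case by simp
next
  case (Suc k)
  have "transpose_mat (A ^\<^sub>m Suc k) = transpose_mat A * transpose_mat (A ^\<^sub>m k)"
    using Suc.prems by (simp add: transpose_mult[of _ n n A n])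
  also have "\<dots> = transpose_mat A ^\<^sub>m Suc k"
    using Suc.IH Suc.prems pow_mat_Suc_left[of "transpose_mat A" n k] by (metis transpose_carrier_mat)
  finally show ?case .
qed

lemma div_lt: "r < m * a \<Longrightarrow> r div m < (a::nat)"
  by (cases "m = 0") (auto simp: div_less_iff_less_mult mult.commute)
lemma mod_lt: "r < m * a \<Longrightarrow> r mod (m::nat) < m"
  by (cases "m = 0") auto

definition stk :: "nat \<Rightarrow> nat \<Rightarrow> (nat \<Rightarrow> nat \<Rightarrow> 'v::zero) \<Rightarrow> nat \<Rightarrow> 'v" where
  "stk m k z = (\<lambda>r. if r < m * k then z (k - r div m) (r mod m) else 0)"

definition sg :: "nat \<Rightarrow> real mat \<Rightarrow> (nat \<Rightarrow> real mat) \<Rightarrow> nat \<Rightarrow> nat \<Rightarrow> pv" where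
  "sg m A L k = lin (transpose_mat (L k)) (stk m k (Xs A)) + tv k"

definition Ys :: "nat \<Rightarrow> real mat \<Rightarrow> (nat \<Rightarrow> real mat) \<Rightarrow> nat \<Rightarrow> nat \<Rightarrow> pv" where
  "Ys m A L k = stk m k (sg m A L)"

lemma stkX_zc: "zc k (stk m k (Xs A) r) \<and> noth (stk m k (Xs A) r)"
proof (cases "r < m * k")
  case True
  have "zc (k - r div m) (Xs A (k - r div m) (r mod m))" "noth (Xs A (k - r div m) (r mod m))"
    using X_zc by auto
  then show ?thesis using True zc_mono[of "k - r div m" _ k] by (simp add: stk_def)
next
  case False then show ?thesis by (simp add: stk_def)
qed

lemma sg_zc: "zc k (sg m A L k i)"
proof -
  have e: "sg m A L k i = lin (transpose_mat (L k)) (stk m k (Xs A)) i + tv k i"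
    by (simp only: sg_def plus_fun_apply)
  show ?thesis unfolding e
    by (intro zc_add zc_lin zc_tv) (use stkX_zc in blast)
qed

lemma Ys_zc: "zc k (Ys m A L k r)"
proof (cases "r < m * k")
  case True
  have "zc (k - r div m) (sg m A L (k - r div m) (r mod m))"
    using sg_zc by auto
  then show ?thesis using True zc_mono[of "k - r div m" _ k] by (simp add: Ys_def stk_def)
next
  case False then show ?thesis by (simp add: Ys_def stk_def)
qed

locale proc =
  fixes m \<kappa> :: nat and A S1 Sw :: "real mat" and Th :: "nat \<Rightarrow> real mat"
  assumes A: "A \<in> carrier_mat m m" and S1: "psd m S1" and Sw: "psd m Sw"
    and Th: "\<And>t. t \<in> {1..\<kappa>} \<Longrightarrow> psd m (Th t)"
begin

sublocale sip "Bp m \<kappa> S1 Sw Th" using Bp_sip S1 Sw Th by blast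

abbreviation "BB \<equiv> Bp m \<kappa> S1 Sw Th"

lemma B_wv: "zc n g \<Longrightarrow> BB (wv n i) g = 0"
  by (rule Bp_disj) (auto simp: wv_def ev_def zc_def)
lemma B_tv: "noth g \<Longrightarrow> BB (tv n i) g = 0"
  by (rule Bp_disj) (auto simp: tv_def ev_def noth_def)
lemma B_tv': "zc k g \<Longrightarrow> k < n \<Longrightarrow> BB (tv n i) g = 0"
  by (rule Bp_disj) (auto simp: tv_def ev_def zc_def)

lemma gram_ww: "n < \<kappa> \<Longrightarrow> gram BB m m (wv n) (wv n) = Cw S1 Sw n"
proof (rule eq_matI)
  fix i j assume "n < \<kappa>" "i < dim_row (Cw S1 Sw n)" "j < dim_col (Cw S1 Sw n)"
  moreover have "Cw S1 Sw n \<in> carrier_mat m m" using S1 Sw by (simp add: Cw_def psd_def)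
  ultimately have ij: "i < m" "j < m" by auto
  have "(\<Sum>j'<m. Cw S1 Sw n $$ (i,j') * ev (0,n,j) (0,n,j')) = (\<Sum>j'<m. if j' = j then Cw S1 Sw n $$ (i,j') else 0)"
    by (rule sum.cong) (auto simp: ev_def)
  then show "gram BB m m (wv n) (wv n) $$ (i,j) = Cw S1 Sw n $$ (i,j)"
    using ij \<open>n < \<kappa>\<close> by (simp add: wv_def Bp_ev0)
qed (use S1 Sw in \<open>auto simp: Cw_def psd_def\<close>)

lemma gram_tt: assumes "a \<in> {1..\<kappa>}" "b \<in> {1..\<kappa>}"
  shows "gram BB m m (tv a) (tv b) = (if a = b then Th a else 0\<^sub>m m m)"
proof (cases "a = b")
  case True
  have Tc: "Th a \<in> carrier_mat m m" using Th[OF assms(1)] by (simp add: psd_def)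
  show ?thesis
  proof (rule eq_matI)
    fix i j assume "i < dim_row (if a = b then Th a else 0\<^sub>m m m)" "j < dim_col (if a = b then Th a else 0\<^sub>m m m)"
    then have ij: "i < m" "j < m" using Tc True by auto
    have "(\<Sum>j'<m. Th a $$ (i,j') * ev (2,a,j) (2,a,j')) = (\<Sum>j'<m. if j' = j then Th a $$ (i,j') else 0)"
      by (rule sum.cong) (auto simp: ev_def)
    then show "gram BB m m (tv a) (tv b) $$ (i,j) = (if a = b then Th a else 0\<^sub>m m m) $$ (i,j)"
      using ij assms True by (simp add: tv_def Bp_ev1)
  qed (use Tc True in auto)
next
  case False
  show ?thesis using False
    by (intro eq_matI) (auto simp: tv_def intro!: Bp_disj simp: ev_def)
qed

lemma gram_zero_lam[simp]: "gram BB m' n' (\<lambda>a b. 0) y = 0\<^sub>m m' n'" "gram BB m' n' x (\<lambda>a b. 0) = 0\<^sub>m m' n'"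
  by (auto intro!: eq_matI simp: zero_fun_def[symmetric])

lemma gram_sym_orth: "(\<And>i j. i < n \<Longrightarrow> j < p \<Longrightarrow> BB (y j) (x i) = 0) \<Longrightarrow> gram BB n p x y = 0\<^sub>m n p"
  by (rule gram_orth) (simp add: symB)

definition Sg :: "nat \<Rightarrow> real mat" where "Sg n = gram BB m m (Xs A n) (Xs A n)"

lemma Sg_carrier: "Sg n \<in> carrier_mat m m" by (simp add: Sg_def)

lemma Sg_Suc: assumes "n < \<kappa>" shows "Sg (Suc n) = A * Sg n * transpose_mat A + Cw S1 Sw n"
proof -
  let ?X = "Xs A n"
  have o1: "gram BB m m ?X (wv n) = 0\<^sub>m m m"
    by (rule gram_sym_orth) (use X_zc B_wv in blast)
  have o2: "gram BB m m (wv n) ?X = 0\<^sub>m m m"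
    by (rule gram_orth) (use X_zc B_wv in blast)
  have "Sg (Suc n) = gram BB m m (lin A ?X) (lin A ?X) + gram BB m m (wv n) (lin A ?X)
     + (gram BB m m (lin A ?X) (wv n) + gram BB m m (wv n) (wv n))"
    by (simp add: Sg_def gram_add_left gram_add_right)
  also have "gram BB m m (lin A ?X) (lin A ?X) = A * Sg n * transpose_mat A"
    using A by (simp add: gram_lin_left gram_lin_right Sg_def)
  also have "gram BB m m (lin A ?X) (wv n) = 0\<^sub>m m m"
    using A by (simp add: gram_lin_left o1)
  also have "gram BB m m (wv n) (lin A ?X) = 0\<^sub>m m m"
    using A by (simp add: gram_lin_right o2)
  also have "gram BB m m (wv n) (wv n) = Cw S1 Sw n" using gram_ww assms by simp
  finally have e: "Sg (Suc n) = A * Sg n * transpose_mat A + 0\<^sub>m m m + (0\<^sub>m m m + Cw S1 Sw n)" .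
  have c: "A * Sg n * transpose_mat A \<in> carrier_mat m m" "Cw S1 Sw n \<in> carrier_mat m m"
    using A S1 Sw Sg_carrier[of n] by (auto simp: Cw_def psd_def)
  show ?thesis unfolding e using c by simp
qed

lemma Sg_closed: "n \<le> \<kappa> \<Longrightarrow> Sg n = (if n = 0 then 0\<^sub>m m m else scov A S1 Sw (n - 1))"
proof (induction n)
  case 0 then show ?case by (simp add: Sg_def)
next
  case (Suc n)
  then have e: "Sg (Suc n) = A * Sg n * transpose_mat A + Cw S1 Sw n" by (simp add: Sg_Suc)
  have S1c: "S1 \<in> carrier_mat m m" using S1 by (simp add: psd_def)
  show ?case
  proof (cases n)
    case 0
    have "Sg 0 = 0\<^sub>m m m" by (simp add: Sg_def)
    then have "A * Sg n * transpose_mat A = 0\<^sub>m m m" using A 0 by simp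
    then show ?thesis using e 0 S1c by (simp add: Cw_def)
  next
    case (Suc n')
    then show ?thesis using e Suc.IH Suc.prems by (simp add: Cw_def)
  qed
qed

lemma X_cross: "b \<le> a \<Longrightarrow> a \<le> \<kappa> \<Longrightarrow> gram BB m m (Xs A a) (Xs A b) = A ^\<^sub>m (a - b) * Sg b"
proof (induction a)
  case 0 then show ?case using A by (simp add: Sg_def)
next
  case (Suc a)
  show ?case
  proof (cases "b = Suc a")
    case True then show ?thesis using A Sg_carrier[of b] by (simp add: Sg_def[symmetric] del: Xs.simps)
  next
    case False
    then have ba: "b \<le> a" using Suc by simp
    have o: "gram BB m m (wv a) (Xs A b) = 0\<^sub>m m m"
      by (rule gram_orth) (use X_zc B_wv zc_mono ba in blast)
    have "gram BB m m (Xs A (Suc a)) (Xs A b) = A * gram BB m m (Xs A a) (Xs A b)"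
      using A by (simp add: gram_add_left gram_lin_left o)
    also have "\<dots> = A * (A ^\<^sub>m (a - b) * Sg b)" using Suc ba by simp
    also have "\<dots> = (A * A ^\<^sub>m (a - b)) * Sg b"
      using A Sg_carrier[of b] by (simp add: assoc_mult_mat[of A m m _ m _ m])
    also have "A * A ^\<^sub>m (a - b) = A ^\<^sub>m (Suc a - b)"
      by (simp only: Suc_diff_le[OF ba]) (rule pow_mat_Suc_left[OF A, symmetric])
    finally show ?thesis .
  qed
qed

lemma Sg_sym: "transpose_mat (Sg n) = Sg n"
  using gram_transpose[of m m "Xs A n" "Xs A n"] by (simp add: Sg_def)

lemma X_xcov: assumes "1 \<le> a" "a \<le> \<kappa>" "1 \<le> b" "b \<le> \<kappa>"
  shows "gram BB m m (Xs A a) (Xs A b) = xcov A S1 Sw a b"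
proof (cases "b \<le> a")
  case True
  then show ?thesis using assms X_cross Sg_closed by (simp add: xcov_def Sigma_o_def)
next
  case False
  have "gram BB m m (Xs A a) (Xs A b) = transpose_mat (gram BB m m (Xs A b) (Xs A a))"
    by (rule gram_transpose)
  also have "\<dots> = transpose_mat (A ^\<^sub>m (b - a) * Sg a)" using X_cross False assms by simp
  also have "\<dots> = Sg a * (transpose_mat A ^\<^sub>m (b - a))"
    using A Sg_carrier Sg_sym by (simp add: transpose_mult[of _ m m _ m] transpose_pow)
  finally show ?thesis using assms False Sg_closed by (simp add: xcov_def Sigma_o_def)
qed

end


context sip begin

lemma ortho_lin_left: "(\<And>j. j < dim_col M \<Longrightarrow> B (x j) w = 0) \<Longrightarrow> B (lin M x i) w = 0"
  by (simp add: lin_def bil)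

lemma loewner_orth:
  assumes orth: "\<And>i j. i < m \<Longrightarrow> j < m \<Longrightarrow> B (x i - z i) (z j) = 0"
  shows "loewner_ge m (gram B m m x x) (gram B m m z z)"
proof -
  have "gram B m m x x - gram B m m z z = gram B m m (x - z) (x - z)"
  proof (rule eq_matI)
    fix i j assume "i < dim_row (gram B m m (x - z) (x - z))" "j < dim_col (gram B m m (x - z) (x - z))"
    then have ij: "i < m" "j < m" by auto
    have 1: "B (x i) (z j) = B (z i) (z j)" using orth[OF ij] by (simp add: bil)
    have 2: "B (x j) (z i) = B (z j) (z i)" using orth[OF ij(2,1)] by (simp add: bil)
    show "(gram B m m x x - gram B m m z z) $$ (i, j) = gram B m m (x - z) (x - z) $$ (i, j)"
      using ij 1 2 symB[of "z j" "z i"] by (simp add: bil symB[of "z i" "x j"])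
  qed auto
  then show ?thesis unfolding loewner_ge_def using psd_gram[of m "x - z"] by simp
qed

end

lemma Ys_shift: assumes "l < m * (k - 1)" "1 \<le> k"
  shows "Ys m A L (k - 1) l = Ys m A L k (l + m)"
proof -
  have m: "m > 0" using assms by (cases "m = 0") auto
  have "l + m < m * k" using assms by (cases k) auto
  moreover have "(l + m) div m = l div m + 1" using m by simp
  moreover have "(l + m) mod m = l mod m" by simp
  moreover have "k - (l div m + 1) = k - 1 - l div m" by simp
  ultimately show ?thesis using assms by (simp add: Ys_def stk_def)
qed

lemma minus_zero_mat': "(G::real mat) \<in> carrier_mat m n \<Longrightarrow> G - 0\<^sub>m m n = G"
  by (rule eq_matI) auto

context proc begin

lemma stackcov_gram: assumes "1 \<le> a" "a \<le> \<kappa>" "1 \<le> b" "b \<le> \<kappa>"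
  shows "stackcov m A S1 Sw a b = gram BB (m*a) (m*b) (stk m a (Xs A)) (stk m b (Xs A))"
proof (rule eq_matI)
  fix r c assume "r < dim_row (gram BB (m*a) (m*b) (stk m a (Xs A)) (stk m b (Xs A)))"
    "c < dim_col (gram BB (m*a) (m*b) (stk m a (Xs A)) (stk m b (Xs A)))"
  then have rc: "r < m * a" "c < m * b" by auto
  have d: "r div m < a" "c div m < b" "r mod m < m" "c mod m < m"
    using rc div_lt mod_lt by auto
  have "stackcov m A S1 Sw a b $$ (r, c) = xcov A S1 Sw (a - r div m) (b - c div m) $$ (r mod m, c mod m)"
    using rc by (simp add: stackcov_def blockmat_def)
  also have "\<dots> = gram BB m m (Xs A (a - r div m)) (Xs A (b - c div m)) $$ (r mod m, c mod m)"
    using X_xcov[of "a - r div m" "b - c div m"] d assms by simp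
  also have "\<dots> = gram BB (m*a) (m*b) (stk m a (Xs A)) (stk m b (Xs A)) $$ (r, c)"
    using rc d by (simp add: stk_def)
  finally show "stackcov m A S1 Sw a b $$ (r, c) = gram BB (m*a) (m*b) (stk m a (Xs A)) (stk m b (Xs A)) $$ (r, c)" .
qed (auto simp: stackcov_def blockmat_def)

lemma gram_sg: assumes a: "a \<in> {1..\<kappa>}" and b: "b \<in> {1..\<kappa>}"
  and La: "L a \<in> carrier_mat (m*a) m" and Lb: "L b \<in> carrier_mat (m*b) m"
  shows "gram BB m m (sg m A L a) (sg m A L b) =
    transpose_mat (L a) * stackcov m A S1 Sw a b * L b + (if a = b then Th a else 0\<^sub>m m m)"
proof -
  let ?P = "lin (transpose_mat (L a)) (stk m a (Xs A))"
  let ?R = "lin (transpose_mat (L b)) (stk m b (Xs A))"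
  have LaT: "transpose_mat (L a) \<in> carrier_mat m (m*a)" using La by simp
  have LbT: "transpose_mat (L b) \<in> carrier_mat m (m*b)" using Lb by simp
  have o1: "gram BB m m ?P (tv b) = 0\<^sub>m m m"
    by (rule gram_sym_orth) (intro B_tv noth_lin, use stkX_zc in blast)
  have o2: "gram BB m m (tv a) ?R = 0\<^sub>m m m"
    by (rule gram_orth) (intro B_tv noth_lin, use stkX_zc in blast)
  have "gram BB m m ?P ?R = transpose_mat (L a) * gram BB (m*a) (m*b) (stk m a (Xs A)) (stk m b (Xs A)) * L b"
    using gram_lin_left[OF LaT] gram_lin_right[OF LbT] LaT Lb
    by (simp add: assoc_mult_mat[of _ m "m*a" _ "m*b" _ m])
  also have "\<dots> = transpose_mat (L a) * stackcov m A S1 Sw a b * L b"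
    using stackcov_gram a b by simp
  finally have e1: "gram BB m m ?P ?R = transpose_mat (L a) * stackcov m A S1 Sw a b * L b" .
  have "gram BB m m (sg m A L a) (sg m A L b) = gram BB m m ?P ?R + gram BB m m (tv a) ?R +
     (gram BB m m ?P (tv b) + gram BB m m (tv a) (tv b))"
    by (simp add: sg_def gram_add_left gram_add_right)
  also have "\<dots> = transpose_mat (L a) * stackcov m A S1 Sw a b * L b + 0\<^sub>m m m +
     (0\<^sub>m m m + (if a = b then Th a else 0\<^sub>m m m))"
    using e1 o1 o2 gram_tt[OF a b] by simp
  also have "\<dots> = transpose_mat (L a) * stackcov m A S1 Sw a b * L b + (if a = b then Th a else 0\<^sub>m m m)"
  proof -
    have Sc: "stackcov m A S1 Sw a b \<in> carrier_mat (m*a) (m*b)"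
      by (simp add: stackcov_def blockmat_def)
    have c1: "transpose_mat (L a) * stackcov m A S1 Sw a b * L b \<in> carrier_mat m m"
      by (rule mult_carrier_mat[OF mult_carrier_mat[OF LaT Sc] Lb])
    have c2: "(if a = b then Th a else 0\<^sub>m m m) \<in> carrier_mat m m"
      using Th[OF a] by (auto simp: psd_def)
    show ?thesis using c1 c2 by simp
  qed
  finally show ?thesis .
qed

lemma sig_cov_gram: assumes k: "1 \<le> k" "k \<le> \<kappa>" and L: "\<And>j. j \<in> {1..\<kappa>} \<Longrightarrow> L j \<in> carrier_mat (m*j) m"
  shows "sig_cov m A S1 Sw L Th k = gram BB (m*k) (m*k) (Ys m A L k) (Ys m A L k)"
proof (rule eq_matI)
  fix r c assume "r < dim_row (gram BB (m*k) (m*k) (Ys m A L k) (Ys m A L k))"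
    "c < dim_col (gram BB (m*k) (m*k) (Ys m A L k) (Ys m A L k))"
  then have rc: "r < m * k" "c < m * k" by auto
  have d: "r div m < k" "c div m < k" "r mod m < m" "c mod m < m"
    using rc div_lt mod_lt by auto
  define a where "a = k - r div m"
  define b where "b = k - c div m"
  have ab: "a \<in> {1..\<kappa>}" "b \<in> {1..\<kappa>}" using d k by (auto simp: a_def b_def)
  have "sig_cov m A S1 Sw L Th k $$ (r, c) =
     (transpose_mat (L a) * stackcov m A S1 Sw a b * L b + (if a = b then Th a else 0\<^sub>m m m)) $$ (r mod m, c mod m)"
    using rc by (simp add: sig_cov_def blockmat_def Let_def a_def b_def)
  also have "\<dots> = gram BB m m (sg m A L a) (sg m A L b) $$ (r mod m, c mod m)"
    using gram_sg[OF ab L[OF ab(1)] L[OF ab(2)]] by simp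
  also have "\<dots> = gram BB (m*k) (m*k) (Ys m A L k) (Ys m A L k) $$ (r, c)"
    using rc d by (simp add: Ys_def stk_def a_def b_def)
  finally show "sig_cov m A S1 Sw L Th k $$ (r, c) = gram BB (m*k) (m*k) (Ys m A L k) (Ys m A L k) $$ (r, c)" .
qed (auto simp: sig_cov_def blockmat_def)

lemma rowcov_gram: assumes "1 \<le> k" "k \<le> \<kappa>" "1 \<le> b" "b \<le> \<kappa>"
  shows "rowcov m A S1 Sw k b = gram BB m (m*b) (Xs A k) (stk m b (Xs A))"
proof (rule eq_matI)
  fix i c assume "i < dim_row (gram BB m (m*b) (Xs A k) (stk m b (Xs A)))"
    "c < dim_col (gram BB m (m*b) (Xs A k) (stk m b (Xs A)))"
  then have ic: "i < m" "c < m * b" by auto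
  have d: "c div m < b" "c mod m < m" using ic div_lt mod_lt by auto
  have "rowcov m A S1 Sw k b $$ (i, c) = xcov A S1 Sw k (b - c div m) $$ (i, c mod m)"
    using ic by (simp add: rowcov_def blockmat_def)
  also have "\<dots> = gram BB m m (Xs A k) (Xs A (b - c div m)) $$ (i, c mod m)"
    using X_xcov[of k "b - c div m"] d assms by simp
  also have "\<dots> = gram BB m (m*b) (Xs A k) (stk m b (Xs A)) $$ (i, c)"
    using ic d by (simp add: stk_def)
  finally show "rowcov m A S1 Sw k b $$ (i, c) = gram BB m (m*b) (Xs A k) (stk m b (Xs A)) $$ (i, c)" .
qed (auto simp: rowcov_def blockmat_def)

lemma cross_cov_gram: assumes k: "1 \<le> k" "k \<le> \<kappa>" and L: "\<And>j. j \<in> {1..\<kappa>} \<Longrightarrow> L j \<in> carrier_mat (m*j) m"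
  shows "cross_cov m A S1 Sw L k = gram BB m (m*k) (Xs A k) (Ys m A L k)"
proof (rule eq_matI)
  fix i c assume "i < dim_row (gram BB m (m*k) (Xs A k) (Ys m A L k))"
    "c < dim_col (gram BB m (m*k) (Xs A k) (Ys m A L k))"
  then have ic: "i < m" "c < m * k" by auto
  have d: "c div m < k" "c mod m < m" using ic div_lt mod_lt by auto
  define b where "b = k - c div m"
  have b: "b \<in> {1..\<kappa>}" using d k by (auto simp: b_def)
  have Lb: "transpose_mat (L b) \<in> carrier_mat m (m*b)" using L[OF b] by simp
  have o: "gram BB m m (Xs A k) (tv b) = 0\<^sub>m m m"
    by (rule gram_sym_orth) (intro B_tv, use X_zc in blast)
  have "gram BB m m (Xs A k) (sg m A L b) = gram BB m (m*b) (Xs A k) (stk m b (Xs A)) * L b + 0\<^sub>m m m"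
    by (simp add: sg_def gram_add_right gram_lin_right[OF Lb] o)
  also have "\<dots> = rowcov m A S1 Sw k b * L b"
  proof -
    have c: "gram BB m (m*b) (Xs A k) (stk m b (Xs A)) * L b \<in> carrier_mat m m"
      using L[OF b] by (intro mult_carrier_mat[of _ m "m*b"]) auto
    show ?thesis using rowcov_gram[of k b] k b c by simp
  qed
  finally have e: "gram BB m m (Xs A k) (sg m A L b) = rowcov m A S1 Sw k b * L b" .
  have "cross_cov m A S1 Sw L k $$ (i, c) = (rowcov m A S1 Sw k b * L b) $$ (i, c mod m)"
    using ic by (simp add: cross_cov_def blockmat_def Let_def b_def)
  also have "\<dots> = gram BB m m (Xs A k) (sg m A L b) $$ (i, c mod m)" using e by simp
  also have "\<dots> = gram BB m (m*k) (Xs A k) (Ys m A L k) $$ (i, c)"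
    using ic d by (simp add: Ys_def stk_def b_def)
  finally show "cross_cov m A S1 Sw L k $$ (i, c) = gram BB m (m*k) (Xs A k) (Ys m A L k) $$ (i, c)" .
qed (auto simp: cross_cov_def blockmat_def)

lemma Hcov_gram: assumes k: "1 \<le> k" "k \<le> \<kappa>" and L: "\<And>j. j \<in> {1..\<kappa>} \<Longrightarrow> L j \<in> carrier_mat (m*j) m"
  shows "Hcov m A S1 Sw L Th k = cond_mean_cov m (m*k) (gram BB m (m*k) (Xs A k) (Ys m A L k))
      (gram BB (m*k) (m*k) (Ys m A L k) (Ys m A L k))"
  unfolding Hcov_def using sig_cov_gram[OF k L] cross_cov_gram[OF k L] by simp

lemma Sigma_o_Sg: "1 \<le> k \<Longrightarrow> k \<le> \<kappa> \<Longrightarrow> Sigma_o A S1 Sw k = Sg k"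
  using Sg_closed by (simp add: Sigma_o_def)

lemma partI: assumes L: "\<And>j. j \<in> {1..\<kappa>} \<Longrightarrow> L j \<in> carrier_mat (m*j) m" and k: "k \<in> {1..\<kappa>}"
  shows "loewner_ge m (Sigma_o A S1 Sw k) (Hcov m A S1 Sw L Th k) \<and>
     (if k = 1 then loewner_ge m (Hcov m A S1 Sw L Th k) (0\<^sub>m m m)
      else loewner_ge m (Hcov m A S1 Sw L Th k) (A * Hcov m A S1 Sw L Th (k - 1) * transpose_mat A))"
proof -
  have proj_k: "\<exists>K\<in>carrier_mat m (m*j). \<forall>i<m. \<forall>l<m*j. BB (Xs A j i - lin K (Ys m A L j) i) (Ys m A L j l) = 0" for j
    by (rule proj)
  obtain K where K: "K \<in> carrier_mat m (m*k)"
    and oK: "\<And>i l. i < m \<Longrightarrow> l < m*k \<Longrightarrow> BB (Xs A k i - lin K (Ys m A L k) i) (Ys m A L k l) = 0"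
    using proj_k[of k] by blast
  define xh where "xh = lin K (Ys m A L k)"
  have H: "Hcov m A S1 Sw L Th k = gram BB m m xh xh"
    unfolding xh_def using Hcov_gram[of k L] k L cond_cov[OF K oK] by simp
  have Hc: "Hcov m A S1 Sw L Th k \<in> carrier_mat m m" using H by simp
  have orth_xh: "BB (Xs A k i - xh i) w = 0" if "i < m" "inspan w (Ys m A L k) (m*k)" for i w
    using ortho_inspan[OF _ that(2)] oK[OF that(1)] by (simp add: xh_def)
  have xh_span: "inspan (xh j) (Ys m A L k) (m*k)" for j
    unfolding xh_def by (rule inspan_lin) (use K inspan_base in auto)
  have part1: "loewner_ge m (Sigma_o A S1 Sw k) (Hcov m A S1 Sw L Th k)"
  proof -
    have "loewner_ge m (gram BB m m (Xs A k) (Xs A k)) (gram BB m m xh xh)"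
      by (rule loewner_orth) (use orth_xh xh_span in auto)
    then show ?thesis using H Sigma_o_Sg[of k] k by (simp add: Sg_def)
  qed
  show ?thesis
  proof (cases "k = 1")
    case True
    have "loewner_ge m (Hcov m A S1 Sw L Th k) (0\<^sub>m m m)"
      unfolding loewner_ge_def using H psd_gram[of m xh] minus_zero_mat'[of "gram BB m m xh xh" m m] by simp
    then show ?thesis using True part1 by simp
  next
    case False
    then have k2: "2 \<le> k" using k by simp
    let ?k' = "k - 1"
    obtain K' where K': "K' \<in> carrier_mat m (m*?k')"
      and oK': "\<And>i l. i < m \<Longrightarrow> l < m*?k' \<Longrightarrow> BB (Xs A ?k' i - lin K' (Ys m A L ?k') i) (Ys m A L ?k' l) = 0"
      using proj_k[of ?k'] by blast
    define xh' where "xh' = lin K' (Ys m A L ?k')"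
    have H': "Hcov m A S1 Sw L Th ?k' = gram BB m m xh' xh'"
      unfolding xh'_def using Hcov_gram[of ?k' L] k k2 L cond_cov[OF K' oK'] by simp
    define z where "z = lin A xh'"
    have Az: "A * Hcov m A S1 Sw L Th ?k' * transpose_mat A = gram BB m m z z"
      unfolding z_def H' using A by (simp add: gram_lin_left gram_lin_right)
    have xh'_span: "inspan (xh' j) (Ys m A L ?k') (m*?k')" for j
      unfolding xh'_def by (rule inspan_lin) (use K' inspan_base in auto)
    have Yshift: "inspan (Ys m A L ?k' l) (Ys m A L k) (m*k)" if "l < m*?k'" for l
    proof -
      have "Ys m A L ?k' l = Ys m A L k (l + m)" using Ys_shift[of l m k] that k by simp
      moreover have "l + m < m * k" using that k2 by (cases k) auto
      ultimately show ?thesis using inspan_base by metis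
    qed
    have z_span: "inspan (z j) (Ys m A L k) (m*k)" for j
      unfolding z_def
      by (rule inspan_lin) (use A xh'_span Yshift inspan_trans in blast)
    have z_span': "inspan (z j) (Ys m A L ?k') (m*?k')" for j
      unfolding z_def by (rule inspan_lin) (use xh'_span in blast)
    have z_zc: "zc ?k' (z j)" for j
      by (rule zc_inspan[OF z_span']) (rule Ys_zc)
    have "loewner_ge m (gram BB m m xh xh) (gram BB m m z z)"
    proof (rule loewner_orth)
      fix i j assume ij: "i < m" "j < m"
      have Xk: "Xs A k = lin A (Xs A ?k') + wv ?k'" using k2 by (cases k) auto
      have e1: "BB (Xs A k i - xh i) (z j) = 0" using orth_xh[OF ij(1) z_span] .
      have e2: "BB (lin A (Xs A ?k' - xh') i) (z j) = 0"
      proof (rule ortho_lin_left)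
        fix l assume "l < dim_col A"
        then have l: "l < m" using A by simp
        show "BB ((Xs A ?k' - xh') l) (z j) = 0"
          using ortho_inspan[OF _ z_span'[of j], of "Xs A ?k' l - xh' l"] oK'[OF l]
          by (simp add: xh'_def)
      qed
      have e3: "BB (wv ?k' i) (z j) = 0" by (rule B_wv[OF z_zc])
      have d: "xh i - z i = (lin A (Xs A ?k' - xh') i + wv ?k' i) - (Xs A k i - xh i)"
        by (simp add: Xk z_def lin_diff)
      have "BB (xh i - z i) (z j) = BB (lin A (Xs A ?k' - xh') i) (z j) + BB (wv ?k' i) (z j)
          - BB (Xs A k i - xh i) (z j)"
        by (simp only: d add_left diff_left)
      then show "BB (xh i - z i) (z j) = 0" using e1 e2 e3 by simp
    qed
    then show ?thesis using False part1 H Az by simp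
  qed
qed

end


definition B2 :: "nat \<Rightarrow> real mat \<Rightarrow> real mat \<Rightarrow> (nat \<Rightarrow> real) \<Rightarrow> (nat \<Rightarrow> real) \<Rightarrow> real" where
  "B2 m P D f g = (\<Sum>i<m. \<Sum>j<m. f i * P $$ (i,j) * g j + f i * D $$ (i,j) * g (m+j)
      + f (m+i) * D $$ (i,j) * g j + f (m+i) * D $$ (i,j) * g (m+j))"

definition ev2 :: "nat \<Rightarrow> nat \<Rightarrow> real" where "ev2 a = (\<lambda>q. if q = a then 1 else 0)"

lemma B2_sip: assumes D: "psd m D" and PD: "psd m (P - D)" and P: "P \<in> carrier_mat m m"
  shows "sip (B2 m P D)"
proof
  have Dc: "D \<in> carrier_mat m m" using D by (simp add: psd_def)
  have Dsym: "D $$ (j,i) = D $$ (i,j)" if "i < m" "j < m" for i j using psd_sym[OF D that] .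
  have Psym: "P $$ (j,i) = P $$ (i,j)" if "i < m" "j < m" for i j
  proof -
    have "(P - D) $$ (j,i) = (P - D) $$ (i,j)" using psd_sym[OF PD that] .
    then show ?thesis using that P Dc Dsym[OF that] by simp
  qed
  fix x y z :: "nat \<Rightarrow> real" and r :: real
  show "B2 m P D (x + y) z = B2 m P D x z + B2 m P D y z"
    by (simp add: B2_def algebra_simps sum.distrib)
  show "B2 m P D (r *\<^sub>R x) z = r * B2 m P D x z"
    by (simp add: B2_def sum_distrib_left algebra_simps)
  show "B2 m P D x y = B2 m P D y x"
    unfolding B2_def
    by (subst sum.swap) (auto intro!: sum.cong simp: Psym Dsym algebra_simps)
  have "B2 m P D x x = (\<Sum>i<m. \<Sum>j<m. x i * (P - D) $$ (i,j) * x j) +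
     (\<Sum>i<m. \<Sum>j<m. (x i + x (m+i)) * D $$ (i,j) * (x j + x (m+j)))"
    unfolding B2_def sum.distrib[symmetric]
    by (auto intro!: sum.cong simp: carrier_matD[OF P] carrier_matD[OF Dc] algebra_simps)
  moreover have "0 \<le> (\<Sum>i<m. \<Sum>j<m. x i * (P - D) $$ (i,j) * x j)"
    using psd_qf[OF PD, of x] .
  moreover have "0 \<le> (\<Sum>i<m. \<Sum>j<m. (x i + x (m+i)) * D $$ (i,j) * (x j + x (m+j)))"
    using psd_qf[OF D, of "\<lambda>i. x i + x (m+i)"] .
  ultimately show "0 \<le> B2 m P D x x" by simp
qed

lemma ite_mult1: "(if b then 1 else 0) * (x::real) = (if b then x else 0)" by simp
lemma ite_mult2: "(x::real) * (if b then 1 else 0) = (if b then x else 0)" by simp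

lemma dsum: assumes "a < (m::nat)" "b < m"
  shows "(\<Sum>i<m. \<Sum>j<m. (if i = a then 1 else 0) * M i j * (if j = b then 1 else 0)) = (M a b :: real)"
proof -
  have "(\<Sum>j<m. (if i = a then 1 else 0) * M i j * (if j = b then 1 else 0)) = (if i = a then M i b else 0)" for i
  proof (cases "i = a")
    case True
    have "(\<Sum>j<m. M a j * (if j = b then 1 else 0)) = (\<Sum>j<m. if j = b then M a j else 0)"
      by (rule sum.cong) auto
    also have "\<dots> = M a b" using assms by (simp add: sum.delta')
    finally show ?thesis using True by simp
  qed simp
  then show ?thesis using assms by simp
qed

lemma B2_ev: assumes a: "a < m" and b: "b < m"
  shows "B2 m P D (ev2 a) (ev2 b) = P $$ (a,b)"
    "B2 m P D (ev2 (m+a)) (ev2 b) = D $$ (a,b)"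
    "B2 m P D (ev2 (m+a)) (ev2 (m+b)) = D $$ (a,b)"
proof -
  have "B2 m P D (ev2 a) (ev2 b) = (\<Sum>i<m. \<Sum>j<m. (if i = a then 1 else 0) * P $$ (i,j) * (if j = b then 1 else 0))"
    unfolding B2_def ev2_def using assms by (intro sum.cong refl) auto
  then show "B2 m P D (ev2 a) (ev2 b) = P $$ (a,b)" using dsum[OF a b, of "\<lambda>i j. P $$ (i,j)"] by simp
  have "B2 m P D (ev2 (m+a)) (ev2 b) = (\<Sum>i<m. \<Sum>j<m. (if i = a then 1 else 0) * D $$ (i,j) * (if j = b then 1 else 0))"
    unfolding B2_def ev2_def using assms by (intro sum.cong refl) auto
  then show "B2 m P D (ev2 (m+a)) (ev2 b) = D $$ (a,b)" using dsum[OF a b, of "\<lambda>i j. D $$ (i,j)"] by simp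
  have "B2 m P D (ev2 (m+a)) (ev2 (m+b)) = (\<Sum>i<m. \<Sum>j<m. (if i = a then 1 else 0) * D $$ (i,j) * (if j = b then 1 else 0))"
    unfolding B2_def ev2_def using assms by (intro sum.cong refl) auto
  then show "B2 m P D (ev2 (m+a)) (ev2 (m+b)) = D $$ (a,b)" using dsum[OF a b, of "\<lambda>i j. D $$ (i,j)"] by simp
qed

lemma LD: assumes D: "psd m D" and PD: "psd m (P - D)" and P: "P \<in> carrier_mat m m"
  shows "\<exists>L \<in> carrier_mat m m. P * L = D \<and> psd m (D - transpose_mat L * P * L)"
proof -
  interpret sip "B2 m P D" by (rule B2_sip[OF assms])
  have Dc: "D \<in> carrier_mat m m" using D by (simp add: psd_def)
  define y where "y = (\<lambda>l. ev2 l)"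
  define x where "x = (\<lambda>i. ev2 (m+i))"
  have Gyy: "gram (B2 m P D) m m y y = P"
    by (rule eq_matI) (use P in \<open>auto simp: y_def B2_ev\<close>)
  have Gxy: "gram (B2 m P D) m m x y = D"
    by (rule eq_matI) (use Dc in \<open>auto simp: x_def y_def B2_ev\<close>)
  have Gxx: "gram (B2 m P D) m m x x = D"
    by (rule eq_matI) (use Dc in \<open>auto simp: x_def B2_ev\<close>)
  obtain K where K: "K \<in> carrier_mat m m"
    and oK: "\<And>i l. i < m \<Longrightarrow> l < m \<Longrightarrow> B2 m P D (x i - lin K y i) (y l) = 0"
    using proj[of m m x y] by blast
  have "gram (B2 m P D) m m x y = gram (B2 m P D) m m (lin K y) y"
    by (rule eq_matI) (use oK in \<open>auto simp: bil\<close>)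
  then have KP: "K * P = D" using gram_lin_left[OF K] Gxy Gyy by simp
  have Pt: "transpose_mat P = P" using gram_transpose[of m m y y] Gyy by simp
  have Dt: "transpose_mat D = D" using D by (simp add: psd_def)
  have PKt: "P * transpose_mat K = D"
  proof -
    have "transpose_mat (K * P) = transpose_mat P * transpose_mat K"
      using K P by (simp add: transpose_mult)
    then show ?thesis using KP Pt Dt by simp
  qed
  have "loewner_ge m (gram (B2 m P D) m m x x) (gram (B2 m P D) m m (lin K y) (lin K y))"
  proof (rule loewner_orth)
    fix i j assume ij: "i < m" "j < m"
    have sp: "inspan (lin K y j) y m"
      by (rule inspan_lin) (use K inspan_base in auto)
    show "B2 m P D (x i - lin K y i) (lin K y j) = 0"
      by (rule ortho_inspan[OF _ sp]) (rule oK[OF ij(1)])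
  qed
  moreover have "gram (B2 m P D) m m (lin K y) (lin K y) = K * P * transpose_mat K"
    using gram_lin_left[OF K] gram_lin_right[OF K] Gyy by simp
  ultimately have "psd m (D - K * P * transpose_mat K)"
    using Gxx by (simp add: loewner_ge_def)
  then show ?thesis using K PKt by (intro bexI[of _ "transpose_mat K"]) auto
qed


primrec xhf :: "real mat \<Rightarrow> (nat \<Rightarrow> real mat) \<Rightarrow> (nat \<Rightarrow> nat \<Rightarrow> pv) \<Rightarrow> nat \<Rightarrow> nat \<Rightarrow> pv" where
  "xhf A Lk sgf 0 = 0"
| "xhf A Lk sgf (Suc n) = lin A (xhf A Lk sgf n) +
     (sgf (Suc n) - lin (transpose_mat (Lk (Suc n))) (lin A (xhf A Lk sgf n)))"

lemma zc_lin': "(\<And>j. j < dim_col M \<Longrightarrow> zc n (x j)) \<Longrightarrow> zc n (lin M x i)"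
  by (auto simp: zc_def lin_def)

lemma inspan_zero_lam[simp]: "inspan (\<lambda>a. 0) y n"
  using inspan_zero[of y n] by (simp add: zero_fun_def)

lemma memL_carrier: "memoryless_L m Lk k \<in> carrier_mat (m*k) m"
  by (simp add: memoryless_L_def)

lemma memL_lin: assumes Lc: "Lk k \<in> carrier_mat m m" and k: "1 \<le> k"
  shows "lin (transpose_mat (memoryless_L m Lk k)) (stk m k (Xs A)) = lin (transpose_mat (Lk k)) (Xs A k)"
proof
  fix i
  show "lin (transpose_mat (memoryless_L m Lk k)) (stk m k (Xs A)) i = lin (transpose_mat (Lk k)) (Xs A k) i"
  proof (cases "i < m")
    case True
    have mk: "m \<le> m * k" using k by simp
    have mk': "\<And>x. x < m \<Longrightarrow> x < m * k" using mk by linarith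
    have sub: "{..<m} \<subseteq> {..<m*k}" using mk by auto
    have "(\<Sum>r<m*k. transpose_mat (memoryless_L m Lk k) $$ (i,r) *\<^sub>R stk m k (Xs A) r)
        = (\<Sum>r<m. transpose_mat (memoryless_L m Lk k) $$ (i,r) *\<^sub>R stk m k (Xs A) r)"
      by (rule sum.mono_neutral_right[OF _ sub]) (use True in \<open>auto simp: memoryless_L_def\<close>)
    also have "\<dots> = (\<Sum>r<m. transpose_mat (Lk k) $$ (i,r) *\<^sub>R Xs A k r)"
      by (rule sum.cong) (use True mk' Lc in \<open>auto simp: memoryless_L_def stk_def\<close>)
    finally show ?thesis using True Lc by (simp add: lin_def memoryless_L_def)
  next
    case False then show ?thesis using Lc by (simp add: lin_def memoryless_L_def)
  qed
qed

context proc begin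

lemma partII_core:
  fixes S' :: "nat \<Rightarrow> real mat" and Lk :: "nat \<Rightarrow> real mat"
  assumes S'0: "S' 0 = 0\<^sub>m m m" and S'c: "\<And>k. S' k \<in> carrier_mat m m"
    and Lc: "\<And>k. k \<in> {1..\<kappa>} \<Longrightarrow> Lk k \<in> carrier_mat m m"
    and PL: "\<And>k. k \<in> {1..\<kappa>} \<Longrightarrow>
       (Sg k - A * S' (k-1) * transpose_mat A) * Lk k = S' k - A * S' (k-1) * transpose_mat A"
    and ThD: "\<And>k. k \<in> {1..\<kappa>} \<Longrightarrow> Th k = (S' k - A * S' (k-1) * transpose_mat A)
        - transpose_mat (Lk k) * (Sg k - A * S' (k-1) * transpose_mat A) * Lk k"
  shows "\<And>k. k \<in> {1..\<kappa>} \<Longrightarrow> Hcov m A S1 Sw (memoryless_L m Lk) Th k = S' k"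
proof -
  define Lm where "Lm = memoryless_L m Lk"
  define sgf where "sgf = sg m A Lm"
  define Y where "Y = Ys m A Lm"
  define xh where "xh = xhf A Lk sgf"
  have AT: "transpose_mat A \<in> carrier_mat m m" using A by simp
  have C: "(\<forall>i<m. inspan (xh n i) (Y n) (m*n)) \<and>
      (\<forall>i<m. \<forall>l<m*n. BB (Xs A n i - xh n i) (Y n l) = 0) \<and>
      gram BB m m (xh n) (xh n) = S' n \<and>
      gram BB m m (Xs A n - xh n) (Xs A n - xh n) = Sg n - S' n" if "n \<le> \<kappa>" for n
    using that
  proof (induction n)
    case 0
    have "Sg 0 - S' 0 = 0\<^sub>m m m" by (rule eq_matI) (auto simp: Sg_def S'0)
    moreover have "gram BB m m (Xs A 0 - xh 0) (Xs A 0 - xh 0) = 0\<^sub>m m m"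
      by (rule eq_matI) (auto simp: xh_def)
    moreover have "gram BB m m (xh 0) (xh 0) = S' 0"
      by (rule eq_matI) (auto simp: xh_def S'0)
    ultimately show ?case by (simp add: xh_def)
  next
    case (Suc n)
    define k where "k = Suc n"
    have nk: "n < \<kappa>" "k \<in> {1..\<kappa>}" "k - 1 = n" using Suc.prems by (auto simp: k_def)
    note IHc = Suc.IH[OF less_imp_le[OF nk(1)]]
    from IHc have IH1: "\<And>i. i < m \<Longrightarrow> inspan (xh n i) (Y n) (m*n)"
      and IH2: "\<And>i l. i < m \<Longrightarrow> l < m*n \<Longrightarrow> BB (Xs A n i - xh n i) (Y n l) = 0"
      and IH3: "gram BB m m (xh n) (xh n) = S' n"
      and IH4: "gram BB m m (Xs A n - xh n) (Xs A n - xh n) = Sg n - S' n" by blast+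
    define L where "L = Lk k"
    have Lc': "L \<in> carrier_mat m m" using Lc[OF nk(2)] by (simp add: L_def)
    have LT: "transpose_mat L \<in> carrier_mat m m" using Lc' by simp
    define Pm where "Pm = Sg k - A * S' n * transpose_mat A"
    define Dm where "Dm = S' k - A * S' n * transpose_mat A"
    have PLm: "Pm * L = Dm" using PL[OF nk(2)] nk by (simp add: Pm_def Dm_def L_def)
    have ThDm: "Th k = Dm - transpose_mat L * Pm * L" using ThD[OF nk(2)] nk by (simp add: Pm_def Dm_def L_def)
    have ASA: "A * S' n * transpose_mat A \<in> carrier_mat m m" using A S'c[of n] by simp
    have Pmc: "Pm \<in> carrier_mat m m" unfolding Pm_def by (rule minus_carrier_mat[OF ASA])
    have Dmc: "Dm \<in> carrier_mat m m" unfolding Dm_def by (rule minus_carrier_mat[OF ASA])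
    define z where "z = lin A (xh n)"
    define e' where "e' = Xs A n - xh n"
    define u where "u = Xs A k - z"
    define nu where "nu = lin (transpose_mat L) u + tv k"
    have sgk: "sgf k = lin (transpose_mat L) (Xs A k) + tv k"
      using memL_lin[where Lk=Lk and k=k and A=A and m=m, OF Lc[OF nk(2)]] nk by (simp add: sgf_def sg_def Lm_def L_def)
    have f_nu: "sgf k = nu + lin (transpose_mat L) z"
      by (simp add: sgk nu_def u_def lin_diff algebra_simps)
    have f_xh: "xh k = z + nu"
      by (simp add: xh_def k_def z_def[unfolded xh_def] nu_def u_def sgk[unfolded k_def] L_def[unfolded k_def]
          lin_diff algebra_simps)
    have Xk: "Xs A k = lin A (Xs A n) + wv n" by (simp add: k_def)
    have f_u: "u = lin A e' + wv n"
      by (simp add: u_def Xk z_def e'_def lin_diff algebra_simps)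
    have xh_zc: "zc n (xh n i)" if "i < m" for i
      by (rule zc_inspan[OF IH1[OF that]]) (simp add: Y_def Ys_zc)
    have z_span: "inspan (z j) (Y n) (m*n)" for j
      unfolding z_def by (rule inspan_lin) (use A IH1 in auto)
    have e'_zc: "zc n (e' j)" if "j < m" for j
    proof -
      have "e' j = Xs A n j - xh n j" by (simp add: e'_def)
      moreover have "zc n (Xs A n j - xh n j)"
        by (rule zc_diff) (use X_zc xh_zc[OF that] in auto)
      ultimately show ?thesis by simp
    qed
    have span_zc: "zc n w" if "inspan w (Y n) (m*n)" for w
      by (rule zc_inspan[OF that]) (simp add: Y_def Ys_zc)
    have e'_orth: "BB (e' i) w = 0" if "i < m" "inspan w (Y n) (m*n)" for i w
      using ortho_inspan[OF _ that(2), of "e' i"] IH2[OF that(1)] by (simp add: e'_def)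
    have u_orth: "BB (u i) w = 0" if "inspan w (Y n) (m*n)" for i w
    proof -
      have "BB (lin A e' i) w = 0"
        by (rule ortho_lin_left) (use A e'_orth that in auto)
      moreover have "BB (wv n i) w = 0" by (rule B_wv[OF span_zc[OF that]])
      ultimately show ?thesis by (simp add: f_u bil)
    qed
    have tv_orth: "BB (tv k i) w = 0" if "inspan w (Y n) (m*n)" for i w
      by (rule B_tv'[OF span_zc[OF that]]) (simp add: k_def)
    have nu_orth: "BB (nu i) w = 0" if "inspan w (Y n) (m*n)" for i w
    proof -
      have "BB (lin (transpose_mat L) u i) w = 0"
        by (rule ortho_lin_left) (use u_orth that in auto)
      then show ?thesis using tv_orth[OF that] by (simp add: nu_def bil)
    qed
    have o1: "gram BB m m (lin A e') (wv n) = 0\<^sub>m m m"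
    proof (rule gram_sym_orth)
      fix i j assume "i < m" "j < m"
      have "zc n (lin A e' i)" by (rule zc_lin') (use A e'_zc in auto)
      then show "BB (wv n j) (lin A e' i) = 0" by (rule B_wv)
    qed
    have o2: "gram BB m m (wv n) (lin A e') = 0\<^sub>m m m"
      using o1 gram_transpose[of m m "wv n" "lin A e'"] by simp
    have guu0: "gram BB m m u u = A * (Sg n - S' n) * transpose_mat A + Cw S1 Sw n"
    proof -
      have "gram BB m m u u = gram BB m m (lin A e') (lin A e') + gram BB m m (wv n) (lin A e') +
          (gram BB m m (lin A e') (wv n) + gram BB m m (wv n) (wv n))"
        by (simp add: f_u gram_add_left gram_add_right)
      also have "\<dots> = A * (Sg n - S' n) * transpose_mat A + 0\<^sub>m m m + (0\<^sub>m m m + Cw S1 Sw n)"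
        using o1 o2 gram_ww[OF nk(1)] IH4 A
        by (simp add: gram_lin_left gram_lin_right e'_def)
      finally have g: "gram BB m m u u = A * (Sg n - S' n) * transpose_mat A + 0\<^sub>m m m + (0\<^sub>m m m + Cw S1 Sw n)" .
      have c1: "A * (Sg n - S' n) * transpose_mat A \<in> carrier_mat m m"
        using A Sg_carrier[of n] S'c[of n] by (metis minus_carrier_mat mult_carrier_mat transpose_carrier_mat)
      have c2: "Cw S1 Sw n \<in> carrier_mat m m" using S1 Sw by (simp add: Cw_def psd_def)
      show ?thesis unfolding g using c1 c2 by simp
    qed
    have guu: "gram BB m m u u = Pm"
    proof -
      have "A * (Sg n - S' n) * transpose_mat A = A * Sg n * transpose_mat A - A * S' n * transpose_mat A"
      proof -
        have "A * (Sg n - S' n) = A * Sg n - A * S' n"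
          by (rule mult_minus_distrib_mat[OF A Sg_carrier S'c])
        moreover have "(A * Sg n - A * S' n) * transpose_mat A = A * Sg n * transpose_mat A - A * S' n * transpose_mat A"
          by (rule minus_mult_distrib_mat[OF mult_carrier_mat[OF A Sg_carrier] mult_carrier_mat[OF A S'c] AT])
        ultimately show ?thesis by simp
      qed
      moreover have "Sg k = A * Sg n * transpose_mat A + Cw S1 Sw n" using Sg_Suc[OF nk(1)] by (simp add: k_def)
      moreover have "Cw S1 Sw n \<in> carrier_mat m m" using S1 Sw by (simp add: Cw_def psd_def)
      ultimately show ?thesis using guu0 A S'c[of n] Sg_carrier[of n]
        by (intro eq_matI) (auto simp: Pm_def)
    qed
    have tv_u: "gram BB m m u (tv k) = 0\<^sub>m m m"
    proof (rule gram_sym_orth)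
      fix i j assume "i < m" "j < m"
      have "BB (tv k j) (Xs A k i) = 0" using B_tv X_zc by blast
      moreover have "BB (tv k j) (z i) = 0"
        using B_tv'[OF span_zc[OF z_span[of i]]] by (simp add: k_def)
      ultimately show "BB (tv k j) (u i) = 0" by (simp add: u_def bil)
    qed
    have tv_u': "gram BB m m (tv k) u = 0\<^sub>m m m"
      using tv_u gram_transpose[of m m "tv k" u] by simp
    have gunu: "gram BB m m u nu = Dm"
    proof -
      have "gram BB m m u nu = Pm * L + 0\<^sub>m m m"
        using guu tv_u by (simp add: nu_def gram_add_right gram_lin_right[OF LT])
      then show ?thesis using PLm Dmc by simp
    qed
    have gnunu: "gram BB m m nu nu = Dm"
    proof -
      have "gram BB m m nu nu = transpose_mat L * Pm * L + 0\<^sub>m m m + (0\<^sub>m m m + Th k)"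
        using guu tv_u tv_u' gram_tt[OF nk(2) nk(2)] LT
        by (simp add: nu_def gram_add_right gram_add_left gram_lin_right[OF LT] gram_lin_left[OF LT])
      also have "\<dots> = Dm"
        using ThDm Lc' Pmc Dmc by (intro eq_matI) auto
      finally show ?thesis .
    qed
    have Dsym: "Dm $$ (j,i) = Dm $$ (i,j)" if "i < m" "j < m" for i j
      using gnunu that by (metis gram_index symB)
    have E_uu: "BB (u i) (u j) = Pm $$ (i,j)" if "i < m" "j < m" for i j
      using guu that by (metis gram_index)
    have E_unu: "BB (u i) (nu j) = Dm $$ (i,j)" if "i < m" "j < m" for i j
      using gunu that by (metis gram_index)
    have E_nunu: "BB (nu i) (nu j) = Dm $$ (i,j)" if "i < m" "j < m" for i j
      using gnunu that by (metis gram_index)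
    have e_eq: "Xs A k - xh k = u - nu" by (simp add: f_xh u_def)
    have Yk_low: "Y k l = nu l + lin (transpose_mat L) z l" if "l < m" for l
    proof -
      have "Y k l = sgf k l" using that by (simp add: Y_def Ys_def stk_def sgf_def k_def)
      then show ?thesis using f_nu by simp
    qed
    have Lz_span: "inspan (lin (transpose_mat L) z l) (Y n) (m*n)" for l
      by (rule inspan_lin) (use z_span in auto)
    have Yshift: "inspan (Y n l) (Y k) (m*k)" if "l < m*n" for l
    proof -
      have "Y n l = Y k (l + m)" using Ys_shift[of l m k A Lm] that nk by (simp add: Y_def)
      moreover have "l + m < m * k" using that by (simp add: k_def)
      ultimately show ?thesis using inspan_base by metis
    qed
    have orth_k: "BB (Xs A k i - xh k i) (Y k l) = 0" if "i < m" "l < m*k" for i l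
    proof (cases "l < m")
      case True
      have "BB (u i - nu i) (nu l) = 0" using E_unu E_nunu that True by (simp add: bil)
      moreover have "BB (u i - nu i) (lin (transpose_mat L) z l) = 0"
        using u_orth[OF Lz_span] nu_orth[OF Lz_span] by (simp add: bil)
      moreover have "Xs A k i - xh k i = u i - nu i" using e_eq by (metis minus_apply)
      ultimately show ?thesis using Yk_low[OF True] by (simp only: add_right)
    next
      case False
      have l': "l - m < m * n" using that False by (simp add: k_def)
      have "Y k l = Y n (l - m)" using Ys_shift[of "l - m" m k A Lm] l' False nk by (simp add: Y_def)
      moreover have "BB (u i - nu i) (Y n (l - m)) = 0"
        using u_orth[OF inspan_base[OF l']] nu_orth[OF inspan_base[OF l']] by (simp add: bil)
      ultimately show ?thesis using e_eq by (metis minus_apply)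
    qed
    have span_k: "inspan (xh k i) (Y k) (m*k)" if "i < m" for i
    proof -
      have z_k: "inspan (z j) (Y k) (m*k)" for j
        by (rule inspan_trans[OF z_span]) (rule Yshift)
      have Lz_k: "inspan (lin (transpose_mat L) z i) (Y k) (m*k)"
        by (rule inspan_trans[OF Lz_span]) (rule Yshift)
      have sg_k: "inspan (sgf k i) (Y k) (m*k)"
      proof -
        have "sgf k i = Y k i" using that by (simp add: Y_def Ys_def stk_def sgf_def k_def)
        moreover have "i < m * k" using that by (simp add: k_def)
        ultimately show ?thesis using inspan_base by metis
      qed
      have "xh k i = z i + (sgf k i - lin (transpose_mat L) z i)"
        using f_xh f_nu by simp
      then show ?thesis using z_k Lz_k sg_k by (simp add: inspan_add inspan_diff)
    qed
    have gxh: "gram BB m m (xh k) (xh k) = S' k"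
    proof -
      have gzz: "gram BB m m z z = A * S' n * transpose_mat A"
        using IH3 A by (simp add: z_def gram_lin_left gram_lin_right)
      have gznu: "gram BB m m z nu = 0\<^sub>m m m"
        by (rule gram_sym_orth) (use nu_orth z_span in blast)
      have gnuz: "gram BB m m nu z = 0\<^sub>m m m"
        by (rule gram_orth) (use nu_orth z_span in blast)
      have "gram BB m m (xh k) (xh k) = A * S' n * transpose_mat A + 0\<^sub>m m m + (0\<^sub>m m m + Dm)"
        using gzz gznu gnuz gnunu by (simp add: f_xh gram_add_left gram_add_right)
      also have "\<dots> = S' k" using ASA S'c[of k] by (intro eq_matI) (auto simp: Dm_def)
      finally show ?thesis .
    qed
    have gee: "gram BB m m (Xs A k - xh k) (Xs A k - xh k) = Sg k - S' k"
    proof (rule eq_matI)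
      fix i j assume "i < dim_row (Sg k - S' k)" "j < dim_col (Sg k - S' k)"
      then have ij: "i < m" "j < m" using S'c[of k] by auto
      have "BB (u i - nu i) (u j - nu j) = Pm $$ (i,j) - Dm $$ (i,j) - Dm $$ (j,i) + Dm $$ (i,j)"
        using E_uu[OF ij] E_unu[OF ij] E_unu[OF ij(2,1)] E_nunu[OF ij]
        by (simp add: bil symB[of "nu i" "u j"])
      also have "\<dots> = (Sg k - S' k) $$ (i,j)"
        using Dsym[OF ij] ij
        by (simp add: Pm_def Dm_def carrier_matD[OF ASA] carrier_matD[OF S'c[of k]] carrier_matD[OF Sg_carrier[of k]] carrier_matD[OF A])
      finally show "gram BB m m (Xs A k - xh k) (Xs A k - xh k) $$ (i, j) = (Sg k - S' k) $$ (i, j)"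
        using ij e_eq by simp
    qed (use S'c[of k] in auto)
    show ?case using span_k orth_k gxh gee unfolding k_def by blast
  qed
  fix k assume k: "k \<in> {1..\<kappa>}"
  then have kk: "k \<le> \<kappa>" "1 \<le> k" by auto
  have Ck: "\<And>i. i < m \<Longrightarrow> inspan (xh k i) (Y k) (m*k)"
    "\<And>i l. i < m \<Longrightarrow> l < m*k \<Longrightarrow> BB (Xs A k i - xh k i) (Y k l) = 0"
    "gram BB m m (xh k) (xh k) = S' k" using C[OF kk(1)] by auto
  obtain K where K: "K \<in> carrier_mat m (m*k)" and xhK: "\<forall>i<m. xh k i = lin K (Y k) i"
    using inspan_mat[of m "xh k" "Y k" "m*k"] Ck(1) by blast
  have oK: "BB (Xs A k i - lin K (Y k) i) (Y k l) = 0" if "i < m" "l < m*k" for i l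
    using Ck(2)[OF that] xhK that by simp
  have "Hcov m A S1 Sw Lm Th k = gram BB m m (lin K (Y k)) (lin K (Y k))"
    using Hcov_gram[of k Lm] kk cond_cov[OF K oK] by (simp add: Y_def Lm_def memL_carrier)
  also have "\<dots> = gram BB m m (xh k) (xh k)" by (rule gram_cong) (use xhK in auto)
  finally show "Hcov m A S1 Sw (memoryless_L m Lk) Th k = S' k" using Ck(3) by (simp add: Lm_def)
qed

end


lemma psd_carrier: "psd m M \<Longrightarrow> M \<in> carrier_mat m m" by (simp add: psd_def)

theorem proposition1:
  fixes m \<kappa> :: nat and A S1 Sw :: "real mat"
  assumes A: "A \<in> carrier_mat m m" and S1: "psd m S1" and Sw: "psd m Sw"
  shows "(\<forall>L Th. signaling_rule m \<kappa> L Th \<longrightarrow>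
            (\<forall>k\<in>{1..\<kappa>}.
               loewner_ge m (Sigma_o A S1 Sw k) (Hcov m A S1 Sw L Th k) \<and>
               (if k = 1 then loewner_ge m (Hcov m A S1 Sw L Th k) (0\<^sub>m m m)
                else loewner_ge m (Hcov m A S1 Sw L Th k)
                       (A * Hcov m A S1 Sw L Th (k - 1) * transpose_mat A))))
       \<and> (\<forall>S :: nat \<Rightarrow> real mat.
            (\<forall>k\<in>{1..\<kappa>}. psd m (S k) \<and> loewner_ge m (Sigma_o A S1 Sw k) (S k) \<and>
               (if k = 1 then loewner_ge m (S k) (0\<^sub>m m m)
                else loewner_ge m (S k) (A * S (k - 1) * transpose_mat A)))
            \<longrightarrow> (\<exists>Lkk Th. (\<forall>k\<in>{1..\<kappa>}. Lkk k \<in> carrier_mat m m) \<and>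
                   signaling_rule m \<kappa> (memoryless_L m Lkk) Th \<and>
                   (\<forall>k\<in>{1..\<kappa>}. Hcov m A S1 Sw (memoryless_L m Lkk) Th k = S k)))"
proof (rule conjI; intro allI impI ballI)
  fix L Th k assume sr: "signaling_rule m \<kappa> L Th" and k: "k \<in> {1..\<kappa>}"
  interpret proc m \<kappa> A S1 Sw Th
    by unfold_locales (use A S1 Sw sr in \<open>auto simp: signaling_rule_def\<close>)
  have L: "\<And>j. j \<in> {1..\<kappa>} \<Longrightarrow> L j \<in> carrier_mat (m*j) m"
    using sr by (auto simp: signaling_rule_def)
  show "loewner_ge m (Sigma_o A S1 Sw k) (Hcov m A S1 Sw L Th k) \<and>
        (if k = 1 then loewner_ge m (Hcov m A S1 Sw L Th k) (0\<^sub>m m m)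
         else loewner_ge m (Hcov m A S1 Sw L Th k) (A * Hcov m A S1 Sw L Th (k - 1) * transpose_mat A))"
    by (rule partI[OF L k])
next
  fix S :: "nat \<Rightarrow> real mat"
  assume hyp: "\<forall>k\<in>{1..\<kappa>}. psd m (S k) \<and> loewner_ge m (Sigma_o A S1 Sw k) (S k) \<and>
               (if k = 1 then loewner_ge m (S k) (0\<^sub>m m m)
                else loewner_ge m (S k) (A * S (k - 1) * transpose_mat A))"
  define S' where "S' k = (if k = 0 \<or> \<kappa> < k then 0\<^sub>m m m else S k)" for k
  have S'c: "S' k \<in> carrier_mat m m" for k
    using hyp by (auto simp: S'_def psd_def)
  have S'S: "k \<in> {1..\<kappa>} \<Longrightarrow> S' k = S k" for k by (simp add: S'_def)
  have AT: "transpose_mat A \<in> carrier_mat m m" using A by simp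
  define Pk where "Pk k = Sigma_o A S1 Sw k - A * S' (k-1) * transpose_mat A" for k
  define Dk where "Dk k = S' k - A * S' (k-1) * transpose_mat A" for k
  define Lk where "Lk k = (SOME L. L \<in> carrier_mat m m \<and> Pk k * L = Dk k \<and>
      psd m (Dk k - transpose_mat L * Pk k * L))" for k
  define Th where "Th k = Dk k - transpose_mat (Lk k) * Pk k * Lk k" for k
  have ASA: "A * S' j * transpose_mat A \<in> carrier_mat m m" for j
    using A S'c[of j] by simp
  have Sigc: "Sigma_o A S1 Sw k \<in> carrier_mat m m" if "k \<in> {1..\<kappa>}" for k
    using hyp that by (auto simp: loewner_ge_def)
  have Lk_prop: "Lk k \<in> carrier_mat m m \<and> Pk k * Lk k = Dk k \<and> psd m (Dk k - transpose_mat (Lk k) * Pk k * Lk k)"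
    if k: "k \<in> {1..\<kappa>}" for k
  proof -
    have Dpsd: "psd m (Dk k)"
    proof (cases "k = 1")
      case True
      have "A * S' 0 * transpose_mat A = 0\<^sub>m m m" using A by (simp add: S'_def)
      then have "Dk k = S k" using True S'S[OF k] hyp k minus_zero_mat'[of "S k" m m]
        by (auto simp: Dk_def psd_def)
      then show ?thesis using hyp k by auto
    next
      case False
      then have "k - 1 \<in> {1..\<kappa>}" using k by auto
      then have "Dk k = S k - A * S (k - 1) * transpose_mat A" using S'S[OF k] S'S by (simp add: Dk_def)
      moreover from hyp k have "if k = 1 then loewner_ge m (S k) (0\<^sub>m m m)
                else loewner_ge m (S k) (A * S (k - 1) * transpose_mat A)" by blast
      ultimately show ?thesis using False by (simp add: loewner_ge_def)
    qed
    have PD: "Pk k - Dk k = Sigma_o A S1 Sw k - S k"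
      by (rule eq_matI) (use Sigc[OF k] S'c[of k] ASA[of "k-1"] S'S[OF k] in \<open>auto simp: Pk_def Dk_def\<close>)
    have PDpsd: "psd m (Pk k - Dk k)" unfolding PD using hyp k by (auto simp: loewner_ge_def)
    have Pc: "Pk k \<in> carrier_mat m m" unfolding Pk_def by (rule minus_carrier_mat[OF ASA])
    have "\<exists>L. L \<in> carrier_mat m m \<and> Pk k * L = Dk k \<and> psd m (Dk k - transpose_mat L * Pk k * L)"
      using LD[OF Dpsd PDpsd Pc] by blast
    then show ?thesis unfolding Lk_def by (rule someI_ex)
  qed
  have Thpsd: "psd m (Th t)" if "t \<in> {1..\<kappa>}" for t
    using Lk_prop[OF that] by (simp add: Th_def)
  interpret proc m \<kappa> A S1 Sw Th
    by unfold_locales (use A S1 Sw Thpsd in auto)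
  have core: "Hcov m A S1 Sw (memoryless_L m Lk) Th k = S' k" if "k \<in> {1..\<kappa>}" for k
  proof (rule partII_core[OF _ S'c _ _ _ that])
    show "S' 0 = 0\<^sub>m m m" by (simp add: S'_def)
    show "\<And>k. k \<in> {1..\<kappa>} \<Longrightarrow> Lk k \<in> carrier_mat m m" using Lk_prop by blast
    show "\<And>k. k \<in> {1..\<kappa>} \<Longrightarrow>
       (Sg k - A * S' (k-1) * transpose_mat A) * Lk k = S' k - A * S' (k-1) * transpose_mat A"
      using Lk_prop Sigma_o_Sg by (auto simp: Pk_def Dk_def)
    show "\<And>k. k \<in> {1..\<kappa>} \<Longrightarrow> Th k = (S' k - A * S' (k-1) * transpose_mat A)
        - transpose_mat (Lk k) * (Sg k - A * S' (k-1) * transpose_mat A) * Lk k"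
      using Sigma_o_Sg by (auto simp: Th_def Pk_def Dk_def)
  qed
  show "\<exists>Lkk Th. (\<forall>k\<in>{1..\<kappa>}. Lkk k \<in> carrier_mat m m) \<and>
                   signaling_rule m \<kappa> (memoryless_L m Lkk) Th \<and>
                   (\<forall>k\<in>{1..\<kappa>}. Hcov m A S1 Sw (memoryless_L m Lkk) Th k = S k)"
  proof (intro exI conjI ballI)
    show "\<And>k. k \<in> {1..\<kappa>} \<Longrightarrow> Lk k \<in> carrier_mat m m" using Lk_prop by blast
    show "signaling_rule m \<kappa> (memoryless_L m Lk) Th"
      unfolding signaling_rule_def using Thpsd memL_carrier by blast
    show "\<And>k. k \<in> {1..\<kappa>} \<Longrightarrow> Hcov m A S1 Sw (memoryless_L m Lk) Th k = S k"
      using core S'S by simp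
  qed
qed


end
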